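(* Let $\mu,\nu\in\mathcal P_1(\mathbb R^d)$ have a common barycentre and let $f:\mathbb R^d\to\mathbb R\cup\{+\infty\}$ be convex, lower semicontinuous and superlinear. If $\inf\{\int f\,d\rho:\rho\in\mathcal P_1(\mathbb R^d),\ \rho\succeq_c\mu,\ \rho\succeq_c\nu\}<+\infty$, then this infimum is attained (by a minimizer that is in general not unique).
   Context: Convex order: $\mu\preceq_c\rho$ (also $\rho\succeq_c\mu$) iff $\int\varphi\,d\mu\le\int\varphi\,d\rho$ for all convex $\varphi:\mathbb R^d\to\mathbb R$. $\mathcal P_1(\mathbb R^d)$: probability measures with finite first moment. *)

theory Defs
  imports "HOL-Probability.Probability"
begin

text \<open>For functions bounded below by an integrable function (e.g. convex
  functions against measures with finite first moment) this is the usual integral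
  with values in (-infinity, +infinity].\<close>
definition eint :: "'a measure \<Rightarrow> ('a \<Rightarrow> ereal) \<Rightarrow> ereal" where
  "eint M g = enn2ereal (\<integral>\<^sup>+ x. e2ennreal (g x) \<partial>M)
             - enn2ereal (\<integral>\<^sup>+ x. e2ennreal (- g x) \<partial>M)"

definition P1 :: "('a::euclidean_space) measure set" where
  "P1 = {\<rho>. sets \<rho> = sets borel \<and> prob_space \<rho> \<and> integrable \<rho> (\<lambda>x. norm x)}"

definition barycentre :: "('a::euclidean_space) measure \<Rightarrow> 'a" where
  "barycentre \<mu> = (\<integral> x. x \<partial>\<mu>)"

definition convex_le :: "('a::euclidean_space) measure \<Rightarrow> 'a measure \<Rightarrow> bool" where
  "convex_le \<mu> \<rho> \<longleftrightarrow>
     (\<forall>\<phi> :: 'a \<Rightarrow> real. convex_on UNIV \<phi> \<longrightarrow>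
        eint \<mu> (\<lambda>x. ereal (\<phi> x)) \<le> eint \<rho> (\<lambda>x. ereal (\<phi> x)))"

definition ereal_convex :: "('a::real_vector \<Rightarrow> ereal) \<Rightarrow> bool" where
  "ereal_convex f \<longleftrightarrow> convex {(x, r::real). f x \<le> ereal r}"

definition lsc :: "('a::topological_space \<Rightarrow> ereal) \<Rightarrow> bool" where
  "lsc f \<longleftrightarrow> (\<forall>x. f x \<le> Liminf (at x) f)"

definition superlinear :: "('a::real_normed_vector \<Rightarrow> ereal) \<Rightarrow> bool" where
  "superlinear f \<longleftrightarrow> ((\<lambda>x. f x / ereal (norm x)) \<longlongrightarrow> \<infinity>) at_infinity"

end

theory Submission
  imports Defs
begin

lemma lscD:
  fixes f :: "'a::metric_space \<Rightarrow> ereal"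
  assumes "lsc f" "c < f x"
  shows "\<exists>e>0. \<forall>y. dist y x < e \<longrightarrow> c < f y"
proof -
  have "c < Liminf (at x) f" using assms unfolding lsc_def by (meson less_le_trans)
  then have "c < (\<Squnion>e\<in>{0<..}. \<Sqinter> (f ` (ball x e - {x})))" by (simp add: Liminf_at)
  then obtain e where e: "e > 0" "c < \<Sqinter> (f ` (ball x e - {x}))"
    by (auto simp: less_SUP_iff)
  show ?thesis
  proof (intro exI[of _ e] conjI allI impI)
    fix y assume "dist y x < e"
    show "c < f y"
    proof (cases "y = x")
      case True then show ?thesis using assms by simp
    next
      case False
      then have "y \<in> ball x e - {x}" using \<open>dist y x < e\<close> by (simp add: dist_commute)
      then show ?thesis using e(2) by (meson INF_lower less_le_trans)
    qed
  qed (use e in auto)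
qed

lemma lsc_tendsto:
  fixes f :: "'a::metric_space \<Rightarrow> ereal"
  assumes "lsc f" "c < f x" "X \<longlonglongrightarrow> x"
  shows "\<forall>\<^sub>F n in sequentially. c < f (X n)"
proof -
  obtain e where e: "e > 0" "\<forall>y. dist y x < e \<longrightarrow> c < f y" using lscD[OF assms(1,2)] by blast
  have "\<forall>\<^sub>F n in sequentially. dist (X n) x < e" using assms(3) e(1) by (rule tendstoD)
  then show ?thesis by eventually_elim (use e in auto)
qed

lemma lsc_open: "lsc (f::'a::metric_space \<Rightarrow> ereal) \<Longrightarrow> open {x. c < f x}"
  unfolding open_dist by (auto dest!: lscD)

lemma lsc_measurable: "lsc (f::'a::euclidean_space \<Rightarrow> ereal) \<Longrightarrow> f \<in> borel_measurable borel"
  by (rule borel_measurableI_greater) (simp add: lsc_open)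

lemma superlinearD:
  fixes f :: "'a::real_normed_vector \<Rightarrow> ereal"
  assumes "superlinear f"
  shows "\<exists>R>0. \<forall>x. R \<le> norm x \<longrightarrow> ereal (M * norm x) \<le> f x"
proof -
  have "\<forall>\<^sub>F x in at_infinity. ereal M < f x / ereal (norm x)"
    using assms unfolding superlinear_def tendsto_PInfty by blast
  then obtain b where b: "\<And>x. b \<le> norm x \<Longrightarrow> ereal M < f x / ereal (norm x)"
    unfolding eventually_at_infinity by blast
  show ?thesis
  proof (intro exI[of _ "max b 1"] conjI allI impI)
    fix x :: 'a assume x: "max b 1 \<le> norm x"
    then have pos: "norm x > 0" by linarith
    have "ereal M < f x / ereal (norm x)" using b x by simp
    then have "ereal M * ereal (norm x) < f x"
      using pos by (simp add: ereal_less_divide_pos mult.commute)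
    then have "ereal (M * norm x) < f x" by (metis mult.commute times_ereal.simps(1))
    then show "ereal (M * norm x) \<le> f x" by simp
  qed simp
qed

lemma lower_bound:
  fixes f :: "'a::euclidean_space \<Rightarrow> ereal"
  assumes lsc: "lsc f" and sl: "superlinear f" and ninf: "\<forall>x. f x \<noteq> -\<infinity>"
  shows "\<exists>C\<ge>0. \<forall>x. ereal (norm x - C) \<le> f x"
proof -
  obtain R where R: "R > 0" "\<And>x. R \<le> norm x \<Longrightarrow> ereal (1 * norm x) \<le> f x"
    using superlinearD[OF sl, of 1] by blast
  have cov: "cball 0 R \<subseteq> (\<Union>n\<in>UNIV. {x. ereal (- real n) < f x})"
  proof
    fix x :: 'a
    show "x \<in> (\<Union>n\<in>UNIV. {x. ereal (- real n) < f x})"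
    proof (cases "f x")
      case (real r)
      obtain n :: nat where "- r < real n" using reals_Archimedean2 by blast
      then show ?thesis using real by (auto intro!: exI[of _ n])
    next
      case PInf then show ?thesis by auto
    next
      case MInf then show ?thesis using ninf by auto
    qed
  qed
  obtain C' where C': "C' \<subseteq> UNIV" "finite C'" "cball 0 R \<subseteq> (\<Union>n\<in>C'. {x. ereal (- real n) < f x})"
    using compactE_image[OF compact_cball, of UNIV "\<lambda>n. {x. ereal (- real n) < f x}", OF lsc_open[OF lsc] cov]
    by blast
  define N where "N = Max (insert 0 C')"
  have N: "n \<in> C' \<Longrightarrow> n \<le> N" for n unfolding N_def using C'(2) by simp
  show ?thesis
  proof (intro exI[of _ "R + real N"] conjI allI)
    fix x :: 'a
    show "ereal (norm x - (R + real N)) \<le> f x"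
    proof (cases "R \<le> norm x")
      case True
      then have "ereal (norm x) \<le> f x" using R(2) by simp
      moreover have "ereal (norm x - (R + real N)) \<le> ereal (norm x)" using R(1) by simp
      ultimately show ?thesis by (rule order.trans[rotated])
    next
      case False
      then have "x \<in> cball 0 R" by simp
      then obtain n where n: "n \<in> C'" "ereal (- real n) < f x" using C'(3) by blast
      have "norm x - (R + real N) \<le> - real n" using False N[OF n(1)] by simp
      then have "ereal (norm x - (R + real N)) \<le> ereal (- real n)" by simp
      then show ?thesis using n(2) by (meson dual_order.trans less_imp_le)
    qed
  qed (use R in simp)
qed

lemma ennreal_aux1: "(w::real) \<le> r \<Longrightarrow> ennreal r + ennreal (- w) = ennreal (r - w) + ennreal (- r) + ennreal w"
  apply (cases "r \<ge> 0"; cases "w \<ge> 0")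
  apply (simp_all add: ennreal_neg ennreal_plus[symmetric] del: ennreal_plus)
  done

lemma enn2ereal_finite: "(N::ennreal) < \<infinity> \<Longrightarrow> enn2ereal N = ereal (enn2real N)"
  by (cases N rule: ennreal_cases) auto

lemma ereal_aux1: "(p::ereal) \<ge> 0 \<Longrightarrow> dd \<ge> 0 \<Longrightarrow> p + ereal wm = dd + ereal n + ereal wp \<Longrightarrow> p - ereal n = dd + ereal (wp - wm)"
  by (cases p; cases dd) auto

lemma eint_lower:
  fixes h :: "'b \<Rightarrow> ereal" and w :: "'b \<Rightarrow> real"
  assumes h[measurable]: "h \<in> borel_measurable M" and w: "integrable M w"
    and le: "\<And>x. x \<in> space M \<Longrightarrow> ereal (w x) \<le> h x"
  shows "eint M h = enn2ereal (\<integral>\<^sup>+ x. e2ennreal (h x - ereal (w x)) \<partial>M) + ereal (\<integral>x. w x \<partial>M)"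
proof -
  have wm[measurable]: "w \<in> borel_measurable M" using w by auto
  have pt: "e2ennreal (h x) + ennreal (- w x) = e2ennreal (h x - ereal (w x)) + e2ennreal (- h x) + ennreal (w x)"
    if x: "x \<in> space M" for x
  proof (cases "h x")
    case (real r)
    have "r \<ge> w x" using le[OF x] real by simp
    then show ?thesis using real ennreal_aux1[of "w x" r] by simp
  next
    case PInf then show ?thesis by simp
  next
    case MInf then show ?thesis using le[OF x] by simp
  qed
  define P where "P = (\<integral>\<^sup>+ x. e2ennreal (h x) \<partial>M)"
  define N where "N = (\<integral>\<^sup>+ x. e2ennreal (- h x) \<partial>M)"
  define D where "D = (\<integral>\<^sup>+ x. e2ennreal (h x - ereal (w x)) \<partial>M)"
  define Wp where "Wp = (\<integral>\<^sup>+ x. ennreal (w x) \<partial>M)"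
  define Wm where "Wm = (\<integral>\<^sup>+ x. ennreal (- w x) \<partial>M)"
  have "P + Wm = (\<integral>\<^sup>+ x. e2ennreal (h x) + ennreal (- w x) \<partial>M)"
    unfolding P_def Wm_def by (rule nn_integral_add[symmetric]) auto
  also have "\<dots> = (\<integral>\<^sup>+ x. e2ennreal (h x - ereal (w x)) + e2ennreal (- h x) + ennreal (w x) \<partial>M)"
    by (rule nn_integral_cong) (simp add: pt)
  also have "\<dots> = D + N + Wp"
    unfolding D_def N_def Wp_def by (simp add: nn_integral_add)
  finally have eq: "P + Wm = D + N + Wp" .
  have nb: "(\<integral>\<^sup>+x. ennreal (norm (w x)) \<partial>M) < \<infinity>" using w by (simp add: integrable_iff_bounded)
  have "Wp \<le> (\<integral>\<^sup>+x. ennreal (norm (w x)) \<partial>M)" unfolding Wp_def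
    by (rule nn_integral_mono) (simp add: ennreal_leI)
  then have Wpf: "Wp < \<infinity>" using nb by simp
  have "Wm \<le> (\<integral>\<^sup>+x. ennreal (norm (w x)) \<partial>M)" unfolding Wm_def
    by (rule nn_integral_mono) (simp add: ennreal_leI)
  then have Wmf: "Wm < \<infinity>" using nb by simp
  have "N \<le> Wm" unfolding N_def Wm_def
  proof (rule nn_integral_mono)
    fix x assume x: "x \<in> space M"
    have "- h x \<le> ereal (- w x)" using le[OF x] by (cases "h x") auto
    then have "e2ennreal (- h x) \<le> e2ennreal (ereal (- w x))" by (rule e2ennreal_mono)
    then show "e2ennreal (- h x) \<le> ennreal (- w x)" by simp
  qed
  then have Nf: "N < \<infinity>" using Wmf by simp
  have int: "(\<integral>x. w x \<partial>M) = enn2real Wp - enn2real Wm"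
    unfolding Wp_def Wm_def by (rule real_lebesgue_integral_def[OF w])
  have e1: "enn2ereal P + enn2ereal Wm = enn2ereal D + enn2ereal N + enn2ereal Wp"
    using arg_cong[OF eq, of enn2ereal] by (simp add: plus_ennreal.rep_eq)
  note c1 = enn2ereal_finite[OF Wmf] and c2 = enn2ereal_finite[OF Nf] and c3 = enn2ereal_finite[OF Wpf]
  have e2: "enn2ereal P + ereal (enn2real Wm) = enn2ereal D + ereal (enn2real N) + ereal (enn2real Wp)"
    using e1 unfolding c1 c2 c3 .
  have "enn2ereal P - ereal (enn2real N) = enn2ereal D + ereal (enn2real Wp - enn2real Wm)"
    by (rule ereal_aux1[OF _ _ e2]) auto
  then have "enn2ereal P - enn2ereal N = enn2ereal D + ereal (enn2real Wp - enn2real Wm)"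
    unfolding c2 .
  then show ?thesis unfolding eint_def int P_def N_def D_def by simp
qed

lemma eint_real:
  assumes "integrable M (w :: 'b \<Rightarrow> real)"
  shows "eint M (\<lambda>x. ereal (w x)) = ereal (\<integral>x. w x \<partial>M)"
  using eint_lower[OF _ assms, of "\<lambda>x. ereal (w x)"] assms by (simp add: zero_ennreal.rep_eq)

lemma eint_nonneg:
  assumes "\<And>x. x \<in> space M \<Longrightarrow> 0 \<le> h x"
  shows "eint M h = enn2ereal (\<integral>\<^sup>+ x. e2ennreal (h x) \<partial>M)"
proof -
  have "(\<integral>\<^sup>+ x. e2ennreal (- h x) \<partial>M) = (\<integral>\<^sup>+ x. 0 \<partial>M)"
    by (rule nn_integral_cong) (use assms in \<open>simp add: e2ennreal_neg\<close>)
  then show ?thesis unfolding eint_def by (simp add: zero_ennreal.rep_eq)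
qed

lemma nn_add_int:
  fixes h :: "'b \<Rightarrow> ereal" and w :: "'b \<Rightarrow> real"
  assumes h[measurable]: "h \<in> borel_measurable M" and w: "integrable M w"
    and h0: "\<And>x. x \<in> space M \<Longrightarrow> 0 \<le> h x"
    and le: "\<And>x. x \<in> space M \<Longrightarrow> 0 \<le> h x + ereal (w x)"
  shows "enn2ereal (\<integral>\<^sup>+ x. e2ennreal (h x + ereal (w x)) \<partial>M)
       = enn2ereal (\<integral>\<^sup>+ x. e2ennreal (h x) \<partial>M) + ereal (\<integral>x. w x \<partial>M)"
proof -
  have wm[measurable]: "w \<in> borel_measurable M" using w by auto
  have "eint M (\<lambda>x. h x + ereal (w x)) = enn2ereal (\<integral>\<^sup>+ x. e2ennreal (h x + ereal (w x)) \<partial>M)"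
    by (rule eint_nonneg) (rule le)
  moreover have "eint M (\<lambda>x. h x + ereal (w x)) = enn2ereal (\<integral>\<^sup>+ x. e2ennreal (h x + ereal (w x) - ereal (w x)) \<partial>M) + ereal (\<integral>x. w x \<partial>M)"
    by (rule eint_lower[OF _ w]) (use h0 in \<open>auto simp: add_increasing\<close>)
  moreover have "(\<integral>\<^sup>+ x. e2ennreal (h x + ereal (w x) - ereal (w x)) \<partial>M) = (\<integral>\<^sup>+ x. e2ennreal (h x) \<partial>M)"
    apply (rule nn_integral_cong)
    subgoal for x by (cases "h x") auto
    done
  ultimately show ?thesis by simp
qed

lemma meas_digit:
  fixes f :: "'a \<Rightarrow> real"
  assumes "f \<in> borel_measurable M"
  shows "(\<lambda>x. real_of_int (\<lfloor>f x\<rfloor> mod c)) \<in> borel_measurable M"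
proof -
  have "(\<lambda>x. \<lfloor>f x\<rfloor>) \<in> M \<rightarrow>\<^sub>M count_space UNIV"
    using measurable_compose[OF assms measurable_real_floor] by simp
  moreover have "(\<lambda>z::int. real_of_int (z mod c)) \<in> count_space UNIV \<rightarrow>\<^sub>M borel" by simp
  ultimately show ?thesis using measurable_compose by blast
qed

subsection \<open>Binary expansion\<close>

definition bdig :: "real \<Rightarrow> nat \<Rightarrow> int" where
  "bdig u m = \<lfloor>2^(m+1) * u\<rfloor> mod 2"

lemma bdig_01: "bdig u m = 0 \<or> bdig u m = 1"
  unfolding bdig_def by auto

lemma floor_half: "\<lfloor>(x::real) / 2\<rfloor> = \<lfloor>x\<rfloor> div 2"
  using floor_divide_real_eq_div[of 2 x] by simp

lemma bin_partial:
  assumes "0 \<le> u" "u < 1"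
  shows "(\<Sum>m<n. real_of_int (bdig u m) / 2^(m+1)) = real_of_int \<lfloor>2^n * u\<rfloor> / 2^n"
proof (induction n)
  case 0
  then show ?case using assms by (simp add: floor_eq_iff)
next
  case (Suc n)
  have "\<lfloor>2^n * u\<rfloor> = \<lfloor>2^(n+1) * u\<rfloor> div 2"
    using floor_half[of "2^(n+1) * u"] by simp
  then have eq: "\<lfloor>2^(n+1) * u\<rfloor> = 2 * \<lfloor>2^n * u\<rfloor> + bdig u n"
    unfolding bdig_def by simp
  have "(\<Sum>m<Suc n. real_of_int (bdig u m) / 2^(m+1)) = real_of_int \<lfloor>2^n * u\<rfloor> / 2^n + real_of_int (bdig u n) / 2^(n+1)"
    using Suc by simp
  also have "\<dots> = (2 * real_of_int \<lfloor>2^n * u\<rfloor> + real_of_int (bdig u n)) / 2^(n+1)"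
    by (simp add: field_simps)
  also have "\<dots> = real_of_int \<lfloor>2^(Suc n) * u\<rfloor> / 2^(Suc n)"
    using arg_cong[OF eq, of real_of_int] by simp
  finally show ?case .
qed

lemma bin_sums:
  assumes "0 \<le> u" "u < 1"
  shows "(\<lambda>m. real_of_int (bdig u m) / 2^(m+1)) sums u"
  unfolding sums_def
proof -
  have lo: "u - inverse (2^n) \<le> real_of_int \<lfloor>2^n * u\<rfloor> / 2^n" for n :: nat
  proof -
    have "2^n * u - 1 \<le> real_of_int \<lfloor>2^n * u\<rfloor>" by linarith
    then have "(2^n * u - 1) / 2^n \<le> real_of_int \<lfloor>2^n * u\<rfloor> / 2^n"
      by (simp add: divide_right_mono)
    moreover have "(2^n * u - 1) / 2^n = u - inverse (2^n::real)" by (simp add: diff_divide_distrib inverse_eq_divide)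
    ultimately show ?thesis by simp
  qed
  have hi: "real_of_int \<lfloor>2^n * u\<rfloor> / 2^n \<le> u" for n :: nat
  proof -
    have "real_of_int \<lfloor>2^n * u\<rfloor> \<le> 2^n * u" by linarith
    then show ?thesis by (simp add: divide_le_eq mult.commute)
  qed
  have t1: "(\<lambda>n. u - inverse (2^n::real)) \<longlonglongrightarrow> u - 0"
    by (intro tendsto_diff tendsto_const LIMSEQ_inverse_realpow_zero) auto
  have "(\<lambda>n. real_of_int \<lfloor>2^n * u\<rfloor> / 2^n) \<longlonglongrightarrow> u"
  proof (rule tendsto_sandwich[of "\<lambda>n. u - inverse (2^n)" _ _ "\<lambda>n. u"])
    show "\<forall>\<^sub>F n in sequentially. u - inverse (2 ^ n) \<le> real_of_int \<lfloor>2^n * u\<rfloor> / 2^n"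
      using lo by (intro always_eventually allI) 
    show "\<forall>\<^sub>F n in sequentially. real_of_int \<lfloor>2^n * u\<rfloor> / 2^n \<le> u"
      using hi by (intro always_eventually allI) 
    show "(\<lambda>n. u - inverse (2^n::real)) \<longlonglongrightarrow> u" using t1 by simp
  qed simp
  then show "(\<lambda>n. \<Sum>m<n. real_of_int (bdig u m) / 2^(m+1)) \<longlonglongrightarrow> u"
    using bin_partial[OF assms] by simp
qed

subsection \<open>Base 4 expansions with digits 0 and 2\<close>

definition qd :: "real \<Rightarrow> nat \<Rightarrow> int" where
  "qd s k = \<lfloor>4^(k+1) * s\<rfloor> mod 4"

lemma q_term_le: "\<bar>x::real\<bar> \<le> 2 \<Longrightarrow> \<bar>x\<bar> / 4^(n+1) \<le> (1/2) * (1/4)^n"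
proof -
  assume x: "\<bar>x\<bar> \<le> 2"
  have "\<bar>x\<bar> / 4^(n+1) \<le> 2 / 4^(n+1)" by (rule divide_right_mono) (use x in auto)
  also have "2 / 4^(n+1) = (1/2) * (1/4::real)^n" by (simp add: power_one_over)
  finally show ?thesis .
qed

lemma summable_q:
  assumes "\<And>k. a k \<in> {0, 2::int}"
  shows "summable (\<lambda>j. real_of_int (a j) / 4^(j+1))"
proof (rule summable_comparison_test)
  have "norm (real_of_int (a n) / 4^(n+1)) \<le> (1/2) * (1/4)^n" for n
  proof -
    have "\<bar>real_of_int (a n)\<bar> \<le> 2" using assms[of n] by auto
    then show ?thesis using q_term_le by simp
  qed
  then show "\<exists>N. \<forall>n\<ge>N. norm (real_of_int (a n) / 4^(n+1)) \<le> (1/2) * (1/4)^n" by blast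
  show "summable (\<lambda>n. (1/2) * (1/4::real)^n)" by (intro summable_mult summable_geometric) auto
qed

lemma suminf_q_bounds:
  assumes "\<And>k. a k \<in> {0, 2::int}"
  shows "0 \<le> (\<Sum>j. real_of_int (a j) / 4^(j+1))" "(\<Sum>j. real_of_int (a j) / 4^(j+1)) \<le> 2/3"
proof -
  have s: "summable (\<lambda>j. real_of_int (a j) / 4^(j+1))" by (rule summable_q[OF assms])
  show "0 \<le> (\<Sum>j. real_of_int (a j) / 4^(j+1))"
  proof (rule suminf_nonneg[OF s])
    fix n have "a n \<ge> 0" using assms[of n] by auto
    then show "0 \<le> real_of_int (a n) / 4^(n+1)" by simp
  qed
  have g: "(\<lambda>j. (1/2) * (1/4::real)^j) sums ((1/2) * (1 / (1 - 1/4)))"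
    by (intro sums_mult geometric_sums) auto
  have "(\<Sum>j. real_of_int (a j) / 4^(j+1)) \<le> (\<Sum>j. (1/2) * (1/4::real)^j)"
  proof (intro suminf_le[OF _ s sums_summable[OF g]])
    fix n
    have "\<bar>real_of_int (a n)\<bar> \<le> 2" "a n \<ge> 0" using assms[of n] by auto
    then show "real_of_int (a n) / 4^(n+1) \<le> (1/2) * (1/4::real)^n" using q_term_le[of "real_of_int (a n)" n] by simp
  qed
  also have "\<dots> = 2/3" using sums_unique[OF g] by simp
  finally show "(\<Sum>j. real_of_int (a j) / 4^(j+1)) \<le> 2/3" .
qed

lemma qd_series:
  assumes a: "\<And>k. a k \<in> {0, 2::int}"
  defines "s \<equiv> (\<Sum>k. real_of_int (a k) / 4^(k+1))"
  shows "qd s k = a k" "4^(k+1) * s - real_of_int \<lfloor>4^(k+1) * s\<rfloor> \<le> 2/3"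
proof -
  define R where "R k = (\<Sum>j. real_of_int (a (j + k)) / 4^(j+1))" for k
  have aR: "\<And>j. a (j + k) \<in> {0,2}" for k using a by blast
  have sumR: "summable (\<lambda>j. real_of_int (a (j + k)) / 4^(j+1))" for k by (rule summable_q[OF aR])
  have Rb: "0 \<le> R k" "R k \<le> 2/3" for k unfolding R_def by (rule suminf_q_bounds[OF aR])+
  have Rstep: "4 * R k = real_of_int (a k) + R (Suc k)" for k
  proof -
    have sm: "summable (\<lambda>j. real_of_int (a (j + k)) / 4^j)"
      using summable_mult[OF sumR[of k], of 4] by (simp add: field_simps)
    have "4 * R k = (\<Sum>j. real_of_int (a (j + k)) / 4^j)"
      unfolding R_def using suminf_mult[OF sumR[of k], of 4] by (simp add: field_simps)
    also have "\<dots> = real_of_int (a k) + (\<Sum>j. real_of_int (a (Suc j + k)) / 4^(Suc j))"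
      using suminf_split_head[OF sm] by simp
    also have "(\<Sum>j. real_of_int (a (Suc j + k)) / 4^(Suc j)) = R (Suc k)"
      unfolding R_def by (simp add: add.commute)
    finally show ?thesis .
  qed
  define Z where "Z = rec_nat (0::int) (\<lambda>k z. 4 * z + a k)"
  have Z0: "Z 0 = 0" and ZS: "Z (Suc k) = 4 * Z k + a k" for k unfolding Z_def by simp_all
  have main: "4^k * s = real_of_int (Z k) + R k" for k
  proof (induction k)
    case 0 then show ?case unfolding s_def R_def by (simp add: Z0)
  next
    case (Suc k)
    have "4^(Suc k) * s = 4 * (4^k * s)" by simp
    also have "\<dots> = 4 * real_of_int (Z k) + 4 * R k" using Suc by simp
    also have "\<dots> = real_of_int (Z (Suc k)) + R (Suc k)" using Rstep[of k] ZS[of k] by simp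
    finally show ?case .
  qed
  have fl: "\<lfloor>4^(k+1) * s\<rfloor> = Z (k+1)"
    using main[of "k+1"] Rb[of "k+1"] by (simp add: floor_eq_iff)
  show "qd s k = a k"
    unfolding qd_def fl using a[of k] by (auto simp: ZS)
  show "4^(k+1) * s - real_of_int \<lfloor>4^(k+1) * s\<rfloor> \<le> 2/3"
    unfolding fl using main[of "k+1"] Rb[of "k+1"] by simp
qed

definition bbasis :: "nat \<Rightarrow> 'a::euclidean_space" where
  "bbasis = (SOME g. bij_betw g {..<DIM('a)} Basis)"

lemma bbasis_bij: "bij_betw (bbasis :: nat \<Rightarrow> 'a) {..<DIM('a::euclidean_space)} Basis"
proof -
  have "\<exists>g. bij_betw g {..<DIM('a)} (Basis :: 'a set)"
    using ex_bij_betw_nat_finite[OF finite_Basis] by (simp add: atLeast0LessThan)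
  then show ?thesis unfolding bbasis_def by (rule someI_ex)
qed

lemma bbasis_in: "i < DIM('a::euclidean_space) \<Longrightarrow> (bbasis i :: 'a) \<in> Basis"
  using bbasis_bij bij_betwE by blast

lemma bbasis_inner: "i < DIM('a::euclidean_space) \<Longrightarrow> j < DIM('a) \<Longrightarrow>
   (bbasis i :: 'a) \<bullet> bbasis j = (if i = j then 1 else 0)"
  using bbasis_bij[where 'a='a] bbasis_in[of i, where 'a='a] bbasis_in[of j, where 'a='a]
  by (auto simp: inner_Basis bij_betw_def inj_on_def)

definition hh :: "real \<Rightarrow> real" where "hh t = 1/2 + t / (2 * (1 + \<bar>t\<bar>))"
definition hinv :: "real \<Rightarrow> real" where "hinv u = (2*u - 1) / (1 - \<bar>2*u - 1\<bar>)"

lemma hh_aux: "2 * hh t - 1 = t / (1 + \<bar>t\<bar>)"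
  unfolding hh_def by (simp add: field_simps)

lemma abs_frac_lt1: "\<bar>t / (1 + \<bar>t\<bar>)\<bar> < (1::real)"
proof -
  have p: "0 < 1 + \<bar>t\<bar>" by simp
  have "\<bar>t / (1 + \<bar>t\<bar>)\<bar> = \<bar>t\<bar> / (1 + \<bar>t\<bar>)" unfolding abs_divide by simp
  also have "\<dots> < 1" using p by (subst divide_less_eq_1_pos) auto
  finally show ?thesis .
qed

lemma hh_bounds: "0 < hh t" "hh t < 1"
proof -
  have "\<bar>2 * hh t - 1\<bar> < 1" using abs_frac_lt1[of t] hh_aux[of t] by simp
  then have "2 * hh t - 1 < 1" "-1 < 2 * hh t - 1" unfolding abs_less_iff by auto
  then show "0 < hh t" "hh t < 1" by linarith+
qed

lemma hinv_hh: "hinv (hh t) = t"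
proof -
  have "\<bar>t / (1 + \<bar>t\<bar>)\<bar> = \<bar>t\<bar> / (1 + \<bar>t\<bar>)" unfolding abs_divide by simp
  then have "1 - \<bar>t / (1 + \<bar>t\<bar>)\<bar> = 1 / (1 + \<bar>t\<bar>)" by (simp add: field_simps)
  then show ?thesis unfolding hinv_def hh_aux by simp
qed

lemma hinv_isCont: "0 < u \<Longrightarrow> u < 1 \<Longrightarrow> isCont hinv u"
  unfolding hinv_def by (intro continuous_intros) auto

lemma hinv_meas[measurable]: "hinv \<in> borel_measurable borel"
  unfolding hinv_def[abs_def] by measurable

lemma hh_meas[measurable]: "hh \<in> borel_measurable borel"
  unfolding hh_def[abs_def] by measurable

lemma hinv_big: "0 < u \<Longrightarrow> u < 1 \<Longrightarrow> 1 / (1 - \<bar>2*u - 1\<bar>) - 1 \<le> \<bar>hinv u\<bar>"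
proof -
  assume u: "0 < u" "u < 1"
  then have p: "0 < 1 - \<bar>2*u - 1\<bar>" by (simp add: abs_less_iff)
  have "\<bar>hinv u\<bar> = \<bar>2*u - 1\<bar> / (1 - \<bar>2*u - 1\<bar>)" unfolding hinv_def abs_divide using p by simp
  also have "\<dots> = 1 / (1 - \<bar>2*u - 1\<bar>) - 1" using p by (simp add: field_simps)
  finally show ?thesis by simp
qed

definition encd :: "'a::euclidean_space \<Rightarrow> nat \<Rightarrow> int" where
  "encd x k = 2 * bdig (hh (x \<bullet> bbasis (k mod DIM('a)))) (k div DIM('a))"

definition enc :: "'a::euclidean_space \<Rightarrow> real" where
  "enc x = (\<Sum>k. real_of_int (encd x k) / 4^(k+1))"

definition ucoord :: "nat \<Rightarrow> real \<Rightarrow> nat \<Rightarrow> real" where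
  "ucoord D s i = (\<Sum>m. real_of_int (qd s (m * D + i)) / 2 / 2^(m+1))"

definition dec :: "real \<Rightarrow> 'a::euclidean_space" where
  "dec s = (\<Sum>i<DIM('a). hinv (ucoord DIM('a) s i) *\<^sub>R bbasis i)"

lemma encd_02: "encd x k \<in> {0, 2}"
  unfolding encd_def using bdig_01 by auto

lemma qd_enc: "qd (enc x) k = encd x k"
  unfolding enc_def by (rule qd_series(1)) (rule encd_02)

lemma frac_enc: "4^(k+1) * enc x - real_of_int \<lfloor>4^(k+1) * enc x\<rfloor> \<le> 2/3"
  unfolding enc_def by (rule qd_series(2)) (rule encd_02)

lemma enc_bounds: "0 \<le> enc x" "enc x \<le> 2/3"
  unfolding enc_def by (rule suminf_q_bounds, rule encd_02)+

lemma ucoord_enc: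
  fixes x :: "'a::euclidean_space"
  assumes i: "i < DIM('a)"
  shows "ucoord DIM('a) (enc x) i = hh (x \<bullet> bbasis i)"
proof -
  have "(m * DIM('a) + i) mod DIM('a) = i" "(m * DIM('a) + i) div DIM('a) = m" for m
    using i by auto
  then have "real_of_int (qd (enc x) (m * DIM('a) + i)) / 2 / 2^(m+1) = real_of_int (bdig (hh (x \<bullet> bbasis i)) m) / 2^(m+1)" for m
    unfolding qd_enc encd_def by simp
  then have "ucoord DIM('a) (enc x) i = (\<Sum>m. real_of_int (bdig (hh (x \<bullet> bbasis i)) m) / 2^(m+1))"
    unfolding ucoord_def by simp
  also have "\<dots> = hh (x \<bullet> bbasis i)"
    using hh_bounds by (intro sums_unique[symmetric] bin_sums) (auto intro: less_imp_le)
  finally show ?thesis .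
qed

lemma dec_enc: "dec (enc x) = (x :: 'a::euclidean_space)"
proof -
  have "dec (enc x) = (\<Sum>i<DIM('a). (x \<bullet> bbasis i) *\<^sub>R (bbasis i :: 'a))"
    unfolding dec_def by (intro sum.cong refl) (simp add: ucoord_enc hinv_hh)
  also have "\<dots> = (\<Sum>b\<in>Basis. (x \<bullet> b) *\<^sub>R b)"
    by (rule sum.reindex_bij_betw[OF bbasis_bij, where g="\<lambda>b. (x \<bullet> b) *\<^sub>R b"])
  also have "\<dots> = x" by (rule euclidean_representation)
  finally show ?thesis .
qed

lemma dec_inner:
  assumes i: "i < DIM('a::euclidean_space)"
  shows "(dec s :: 'a) \<bullet> bbasis i = hinv (ucoord DIM('a) s i)"
proof -
  have "(dec s :: 'a) \<bullet> bbasis i = (\<Sum>j<DIM('a). hinv (ucoord DIM('a) s j) * ((bbasis j :: 'a) \<bullet> bbasis i))"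
    unfolding dec_def by (simp add: inner_sum_left)
  also have "\<dots> = (\<Sum>j<DIM('a). if j = i then hinv (ucoord DIM('a) s j) else 0)"
    using i by (intro sum.cong refl) (simp add: bbasis_inner)
  also have "\<dots> = hinv (ucoord DIM('a) s i)" using i by simp
  finally show ?thesis .
qed

lemma enc_meas[measurable]: "(enc :: 'a::euclidean_space \<Rightarrow> real) \<in> borel_measurable borel"
proof -
  have "(\<lambda>x::'a. real_of_int (encd x k) / 4^(k+1)) \<in> borel_measurable borel" for k
  proof -
    have "(\<lambda>x::'a. 2^(k div DIM('a) + 1) * hh (x \<bullet> bbasis (k mod DIM('a)))) \<in> borel_measurable borel"
      by measurable
    from meas_digit[OF this, of 2] show ?thesis
      unfolding encd_def bdig_def by simp
  qed
  then show ?thesis unfolding enc_def[abs_def] by (rule borel_measurable_suminf)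
qed

lemma ucoord_meas[measurable]: "(\<lambda>s. ucoord D s i) \<in> borel_measurable borel"
proof -
  have "(\<lambda>s. real_of_int (qd s (m * D + i)) / 2 / 2^(m+1)) \<in> borel_measurable borel" for m
  proof -
    have "(\<lambda>s::real. 4^(m * D + i + 1) * s) \<in> borel_measurable borel" by measurable
    from meas_digit[OF this, of 4] show ?thesis unfolding qd_def by simp
  qed
  then show ?thesis unfolding ucoord_def by (rule borel_measurable_suminf)
qed

lemma dec_meas[measurable]: "(dec :: real \<Rightarrow> 'a::euclidean_space) \<in> borel_measurable borel"
  unfolding dec_def[abs_def] by measurable

lemma floor_ev:
  fixes t :: "nat \<Rightarrow> real"
  assumes "t \<longlonglongrightarrow> t0" "\<And>n. t n - real_of_int \<lfloor>t n\<rfloor> \<le> 2/3"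
  shows "\<forall>\<^sub>F n in sequentially. \<lfloor>t n\<rfloor> = \<lfloor>t0\<rfloor>"
proof -
  define z where "z = \<lfloor>t0\<rfloor>"
  have pos: "0 < min (1/3) (real_of_int z + 1 - t0)" unfolding z_def by linarith
  have "\<forall>\<^sub>F n in sequentially. dist (t n) t0 < min (1/3) (real_of_int z + 1 - t0)"
    using assms(1) pos by (rule tendstoD)
  then show ?thesis
  proof eventually_elim
    case (elim n)
    then have d: "\<bar>t n - t0\<bar> < 1/3" "t n < real_of_int z + 1" by (auto simp: dist_real_def)
    have "\<lfloor>t n\<rfloor> \<le> z" using d(2) by linarith
    moreover have "\<lfloor>t n\<rfloor> \<ge> z"
    proof (rule ccontr)
      assume "\<not> \<lfloor>t n\<rfloor> \<ge> z"
      then have "real_of_int \<lfloor>t n\<rfloor> \<le> real_of_int z - 1" by linarith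
      moreover have "real_of_int z \<le> t0" unfolding z_def by linarith
      ultimately show False using assms(2)[of n] d(1) by linarith
    qed
    ultimately show ?case unfolding z_def by simp
  qed
qed

lemma ucoord_conv:
  assumes ev: "\<And>k. \<forall>\<^sub>F n in sequentially. qd (s n) k = qd s0 k"
    and d: "\<And>n k. qd (s n) k \<in> {0, 2}"
  shows "(\<lambda>n. ucoord D (s n) i) \<longlonglongrightarrow> ucoord D s0 i"
proof -
  have b: "\<bar>real_of_int (qd (s n) k) / 2 / 2^(m+1)\<bar> \<le> 1 / 2^(m+1)" for n k m
    using d[of n k] by auto
  have "(\<lambda>n. \<Sum>m. real_of_int (qd (s n) (m * D + i)) / 2 / 2^(m+1)) \<longlonglongrightarrow> (\<Sum>m. real_of_int (qd s0 (m * D + i)) / 2 / 2^(m+1))"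
  proof (rule tannerys_theorem[THEN conjunct2, THEN conjunct2])
    fix m
    show "(\<lambda>n. real_of_int (qd (s n) (m * D + i)) / 2 / 2^(m+1)) \<longlonglongrightarrow> real_of_int (qd s0 (m * D + i)) / 2 / 2^(m+1)"
      by (rule tendsto_eventually) (use ev[of "m * D + i"] in \<open>eventually_elim, simp\<close>)
  next
    show "\<forall>\<^sub>F (m, n) in sequentially \<times>\<^sub>F sequentially. norm (real_of_int (qd (s n) (m * D + i)) / 2 / 2^(m+1)) \<le> 1 / 2^(m+1)"
      using b by (intro always_eventually) auto
  next
    show "summable (\<lambda>m. 1 / 2^(m+1) :: real)"
      using summable_mult[OF summable_geometric[of "1/2::real"], of "1/2"] by (simp add: power_one_over)
  qed simp
  then show ?thesis unfolding ucoord_def .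
qed

definition goodset :: "nat \<Rightarrow> real set" where
  "goodset D = {s. (\<forall>k. qd s k \<in> {0, 2} \<and> 4^(k+1) * s - real_of_int \<lfloor>4^(k+1) * s\<rfloor> \<le> 2/3)
                 \<and> (\<forall>i<D. 0 < ucoord D s i \<and> ucoord D s i < 1)}"

lemma qd_meas[measurable]: "(\<lambda>s. qd s k) \<in> borel \<rightarrow>\<^sub>M count_space UNIV"
proof -
  have "(\<lambda>s::real. \<lfloor>4^(k+1) * s\<rfloor>) \<in> borel \<rightarrow>\<^sub>M count_space UNIV"
    using measurable_compose[OF _ measurable_real_floor, of "\<lambda>s::real. 4^(k+1) * s" borel] by simp
  then show ?thesis unfolding qd_def by simp
qed

lemma pred_qd[measurable]: "Measurable.pred borel (\<lambda>s. qd s k \<in> {0, 2})"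
proof -
  have "(\<lambda>s. qd s k) -` {0, 2} \<inter> space borel \<in> sets borel"
    by (rule measurable_sets[OF qd_meas]) simp
  then show ?thesis unfolding pred_def by (simp add: vimage_def Int_def)
qed

lemma floor_meas4[measurable]: "(\<lambda>s::real. real_of_int \<lfloor>4^(k+1) * s\<rfloor>) \<in> borel_measurable borel"
  using measurable_compose[OF _ borel_measurable_real_floor, of "\<lambda>s::real. 4^(k+1) * s" borel] by simp

lemma pred_uc[measurable]: "Measurable.pred borel (\<lambda>s. \<forall>i<D. 0 < ucoord D s i \<and> ucoord D s i < 1)"
proof -
  have "Measurable.pred borel (\<lambda>s. \<forall>i. i < D \<longrightarrow> 0 < ucoord D s i \<and> ucoord D s i < 1)"
    by measurable
  then show ?thesis by simp
qed

lemma goodset_sets: "goodset D \<in> sets borel"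
proof -
  have "Measurable.pred borel (\<lambda>s. s \<in> goodset D)"
    unfolding goodset_def by measurable
  then show ?thesis by (simp add: pred_def)
qed

lemma enc_good: "enc (x :: 'a::euclidean_space) \<in> goodset DIM('a)"
  unfolding goodset_def
proof (intro CollectI conjI allI impI)
  fix k show "qd (enc x) k \<in> {0, 2}" unfolding qd_enc by (rule encd_02)
  show "4^(k+1) * enc x - real_of_int \<lfloor>4^(k+1) * enc x\<rfloor> \<le> 2/3" by (rule frac_enc)
next
  fix i assume i: "i < DIM('a)"
  show "0 < ucoord DIM('a) (enc x) i" "ucoord DIM('a) (enc x) i < 1"
    unfolding ucoord_enc[OF i] by (rule hh_bounds)+
qed

lemma compactness:
  fixes \<rho> :: "nat \<Rightarrow> 'a::euclidean_space measure" and B :: ennreal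
  assumes P: "\<And>n. prob_space (\<rho> n)" and S: "\<And>n. sets (\<rho> n) = sets borel"
    and bd: "\<And>n. (\<integral>\<^sup>+x. ennreal (norm x) \<partial>\<rho> n) \<le> B" and Bf: "B < \<infinity>"
  shows "\<exists>(\<Omega>::real measure) r (Xs :: nat \<Rightarrow> real \<Rightarrow> 'a) X. prob_space \<Omega> \<and> strict_mono r \<and> (\<forall>n. Xs n \<in> borel_measurable \<Omega>)
     \<and> (\<forall>n. distr \<Omega> borel (Xs n) = \<rho> (r n)) \<and> X \<in> borel_measurable \<Omega>
     \<and> (AE \<omega> in \<Omega>. (\<lambda>n. Xs n \<omega>) \<longlonglongrightarrow> X \<omega>)"
proof -
  have encm: "enc \<in> \<rho> n \<rightarrow>\<^sub>M borel" for n by (subst measurable_cong_sets[OF S[of n] refl]) (rule enc_meas)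
  have spc: "space (\<rho> n) = UNIV" for n using sets_eq_imp_space_eq[OF S[of n]] by simp
  define \<sigma> where "\<sigma> n = distr (\<rho> n) borel enc" for n
  have rd: "real_distribution (\<sigma> n)" for n
    unfolding real_distribution_def real_distribution_axioms_def \<sigma>_def
    using prob_space.prob_space_distr[OF P encm] by simp
  have tight: "tight \<sigma>"
    unfolding tight_def
  proof (intro conjI allI impI)
    fix n show "real_distribution (\<sigma> n)" by (rule rd)
  next
    fix e :: real assume e: "0 < e"
    have "measure (\<sigma> n) {-1<..1} = 1" for n
    proof -
      have "measure (\<sigma> n) {-1<..1} = measure (\<rho> n) (enc -` {-1<..1} \<inter> space (\<rho> n))"
        unfolding \<sigma>_def by (rule measure_distr[OF encm]) simp
      also have "enc -` {-1<..1} \<inter> space (\<rho> n) = space (\<rho> n)"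
      proof -
        have eb: "-1 < enc x" "enc x \<le> 1" for x :: 'a using enc_bounds[of x] by linarith+
        then show ?thesis by (auto simp: spc)
      qed
      also have "measure (\<rho> n) (space (\<rho> n)) = 1" using prob_space.prob_space[OF P] by simp
      finally show ?thesis .
    qed
    then show "\<exists>a b. a < b \<and> (\<forall>n. 1 - e < measure (\<sigma> n) {a<..b})"
      using e by (intro exI[of _ "-1"] exI[of _ 1]) auto
  qed
  obtain r M0 where r: "strict_mono r" "real_distribution M0" "weak_conv_m (\<sigma> \<circ> id \<circ> r) M0"
    using tight_imp_convergent_subsubsequence[OF tight, of id] by (auto simp: strict_mono_def)
  have rd': "real_distribution ((\<sigma> \<circ> id \<circ> r) n)" for n using rd by simp
  obtain \<Omega> :: "real measure" and Ys :: "nat \<Rightarrow> real \<Rightarrow> real" and Y :: "real \<Rightarrow> real" where sk: "prob_space \<Omega>" "\<And>n. Ys n \<in> borel_measurable \<Omega>"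
    "\<And>n. distr \<Omega> borel (Ys n) = (\<sigma> \<circ> id \<circ> r) n" "Y \<in> \<Omega> \<rightarrow>\<^sub>M lborel"
    "\<And>\<omega>. \<omega> \<in> space \<Omega> \<Longrightarrow> (\<lambda>n. Ys n \<omega>) \<longlonglongrightarrow> Y \<omega>"
    using Skorohod[OF rd' r(2,3)] by blast
  have Ym: "Y \<in> borel_measurable \<Omega>" using sk(4) by (simp add: measurable_lborel1)
  define Xs where "Xs n \<omega> = (dec (Ys n \<omega>) :: 'a)" for n \<omega>
  define X where "X \<omega> = (dec (Y \<omega>) :: 'a)" for \<omega>
  have Xsm: "Xs n \<in> borel_measurable \<Omega>" for n
    unfolding Xs_def using measurable_compose[OF sk(2) dec_meas[where 'a='a]] by simp
  have Xm: "X \<in> borel_measurable \<Omega>"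
    unfolding X_def using measurable_compose[OF Ym dec_meas[where 'a='a]] by simp
  have distrX: "distr \<Omega> borel (Xs n) = \<rho> (r n)" for n
  proof -
    have "distr \<Omega> borel (Xs n) = distr (distr \<Omega> borel (Ys n)) borel dec"
      unfolding Xs_def using distr_distr[OF dec_meas[where 'a='a] sk(2)] by (simp add: comp_def)
    also have "\<dots> = distr (distr (\<rho> (r n)) borel enc) borel dec"
      using sk(3)[of n] by (simp add: \<sigma>_def)
    also have "\<dots> = distr (\<rho> (r n)) borel (dec \<circ> enc)"
      by (rule distr_distr[OF dec_meas[where 'a='a] encm])
    also have "\<dots> = distr (\<rho> (r n)) borel (\<lambda>x. x)"
      by (rule distr_cong) (auto simp: dec_enc)
    also have "\<dots> = \<rho> (r n)" by (rule distr_id2) (simp add: S)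
    finally show ?thesis .
  qed
  have good: "AE \<omega> in \<Omega>. \<forall>n. Ys n \<omega> \<in> goodset DIM('a)"
  proof (subst AE_all_countable, intro allI)
    fix n
    have "AE s in distr \<Omega> borel (Ys n). s \<in> goodset DIM('a)"
    proof -
      have "AE s in \<sigma> (r n). s \<in> goodset DIM('a)"
        unfolding \<sigma>_def
        by (subst AE_distr_iff[OF encm]) (auto intro!: AE_I2 simp: enc_good goodset_sets)
      moreover have e: "distr \<Omega> borel (Ys n) = \<sigma> (r n)" using sk(3)[of n] by simp
      ultimately show ?thesis by (simp only: e)
    qed
    then show "AE \<omega> in \<Omega>. Ys n \<omega> \<in> goodset DIM('a)"
      by (subst (asm) AE_distr_iff[OF sk(2)]) (auto simp: goodset_sets)
  qed
  have normm: "(\<lambda>\<omega>. ennreal (norm (Xs n \<omega>))) \<in> borel_measurable \<Omega>" for n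
    using Xsm by measurable
  have intXs: "(\<integral>\<^sup>+\<omega>. ennreal (norm (Xs n \<omega>)) \<partial>\<Omega>) \<le> B" for n
  proof -
    have "(\<integral>\<^sup>+\<omega>. ennreal (norm (Xs n \<omega>)) \<partial>\<Omega>) = (\<integral>\<^sup>+x. ennreal (norm x) \<partial>distr \<Omega> borel (Xs n))"
      by (rule nn_integral_distr[symmetric, OF Xsm]) simp
    then show ?thesis using bd[of "r n"] distrX[of n] by simp
  qed
  have "(\<integral>\<^sup>+\<omega>. liminf (\<lambda>n. ennreal (norm (Xs n \<omega>))) \<partial>\<Omega>) \<le> liminf (\<lambda>n. \<integral>\<^sup>+\<omega>. ennreal (norm (Xs n \<omega>)) \<partial>\<Omega>)"
    by (rule nn_integral_liminf) (rule normm)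
  also have "\<dots> \<le> B" by (rule Liminf_le) (use intXs in auto)
  finally have "(\<integral>\<^sup>+\<omega>. liminf (\<lambda>n. ennreal (norm (Xs n \<omega>))) \<partial>\<Omega>) \<noteq> \<infinity>" using Bf by auto
  then have finlim: "AE \<omega> in \<Omega>. liminf (\<lambda>n. ennreal (norm (Xs n \<omega>))) \<noteq> \<infinity>"
    by (intro nn_integral_PInf_AE borel_measurable_liminf normm)
  have conv: "AE \<omega> in \<Omega>. (\<lambda>n. Xs n \<omega>) \<longlonglongrightarrow> X \<omega>"
    using good finlim AE_space
  proof eventually_elim
    case (elim \<omega>)
    define s where "s n = Ys n \<omega>" for n
    define s0 where "s0 = Y \<omega>"
    have ss: "s \<longlonglongrightarrow> s0" unfolding s_def s0_def using sk(5) elim(3) by simp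
    have sg: "s n \<in> goodset DIM('a)" for n using elim(1) unfolding s_def by simp
    have evq: "\<forall>\<^sub>F n in sequentially. qd (s n) k = qd s0 k" for k
    proof -
      have "(\<lambda>n. 4^(k+1) * s n) \<longlonglongrightarrow> 4^(k+1) * s0" by (intro tendsto_mult_left ss)
      then have "\<forall>\<^sub>F n in sequentially. \<lfloor>4^(k+1) * s n\<rfloor> = \<lfloor>4^(k+1) * s0\<rfloor>"
        by (rule floor_ev) (use sg in \<open>auto simp: goodset_def\<close>)
      then show ?thesis by eventually_elim (simp add: qd_def)
    qed
    have d02: "qd (s n) k \<in> {0, 2}" for n k using sg[of n] by (simp add: goodset_def)
    define u where "u n i = ucoord DIM('a) (s n) i" for n i
    define u0 where "u0 i = ucoord DIM('a) s0 i" for i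
    have uconv: "(\<lambda>n. u n i) \<longlonglongrightarrow> u0 i" for i
      unfolding u_def u0_def by (rule ucoord_conv[OF evq d02])
    have ub: "i < DIM('a) \<Longrightarrow> 0 < u n i \<and> u n i < 1" for n i
      using sg[of n] by (simp add: goodset_def u_def)
    have u0b: "i < DIM('a) \<Longrightarrow> 0 \<le> u0 i \<and> u0 i \<le> 1" for i
    proof -
      assume i: "i < DIM('a)"
      have "0 \<le> u0 i" by (rule LIMSEQ_le_const[OF uconv]) (use ub[OF i] less_imp_le in blast)
      moreover have "u0 i \<le> 1" by (rule LIMSEQ_le_const2[OF uconv]) (use ub[OF i] less_imp_le in blast)
      ultimately show ?thesis by simp
    qed
    show ?case
    proof (cases "\<forall>i<DIM('a). 0 < u0 i \<and> u0 i < 1")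
      case True
      have "(\<lambda>n. (\<Sum>i<DIM('a). hinv (u n i) *\<^sub>R (bbasis i :: 'a))) \<longlonglongrightarrow> (\<Sum>i<DIM('a). hinv (u0 i) *\<^sub>R bbasis i)"
      proof (intro tendsto_sum tendsto_scaleR tendsto_const)
        fix i assume i: "i \<in> {..<DIM('a)}"
        show "(\<lambda>n. hinv (u n i)) \<longlonglongrightarrow> hinv (u0 i)"
          using True i by (intro isCont_tendsto_compose[OF hinv_isCont uconv]) auto
      qed
      then show ?thesis unfolding Xs_def X_def dec_def u_def u0_def s_def s0_def .
    next
      case False
      then obtain i where i: "i < DIM('a)" "u0 i = 0 \<or> u0 i = 1" using u0b by force
      have lim0: "(\<lambda>n. 1 - \<bar>2 * u n i - 1\<bar>) \<longlonglongrightarrow> 1 - \<bar>2 * u0 i - 1\<bar>"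
        by (intro tendsto_intros uconv)
      have z: "1 - \<bar>2 * u0 i - 1\<bar> = 0" using i(2) by auto
      have "\<infinity> \<le> liminf (\<lambda>n. ennreal (norm (Xs n \<omega>)))"
        unfolding le_Liminf_iff
      proof (intro allI impI)
        fix y :: ennreal assume y: "y < \<infinity>"
        define c where "c = enn2real y"
        have yc: "y = ennreal c" "0 \<le> c" using y unfolding c_def by (auto simp: less_top)
        have "\<forall>\<^sub>F n in sequentially. 1 - \<bar>2 * u n i - 1\<bar> < 1 / (c + 1)"
          using lim0 z yc(2) by (intro order_tendstoD(2)) auto
        then show "\<forall>\<^sub>F n in sequentially. y < ennreal (norm (Xs n \<omega>))"
        proof eventually_elim
          case (elim n)
          have unb: "0 < u n i" "u n i < 1" using ub[OF i(1)] by auto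
          then have p: "0 < 1 - \<bar>2 * u n i - 1\<bar>" by (simp add: abs_less_iff)
          have "c + 1 < 1 / (1 - \<bar>2 * u n i - 1\<bar>)"
            using elim p yc(2) by (simp add: field_simps)
          also have "\<dots> \<le> \<bar>hinv (u n i)\<bar> + 1" using hinv_big[OF unb] by simp
          also have "\<bar>hinv (u n i)\<bar> = \<bar>Xs n \<omega> \<bullet> bbasis i\<bar>"
            unfolding Xs_def u_def s_def using dec_inner[OF i(1)] by simp
          also have "\<dots> \<le> norm (Xs n \<omega>)" by (rule Basis_le_norm[OF bbasis_in[OF i(1)]])
          finally have "c < norm (Xs n \<omega>)" by simp
          then show ?case using yc by (simp add: ennreal_less_iff)
        qed
      qed
      then show ?thesis using elim(2) by (simp add: top_unique)
    qed
  qed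
  show ?thesis
    using sk(1) r(1) Xsm distrX Xm conv by (intro exI[of _ \<Omega>] exI[of _ r] exI[of _ Xs] exI[of _ X]) auto
qed

lemma convex_linear_lower:
  fixes \<phi> :: "'a::euclidean_space \<Rightarrow> real"
  assumes cv: "convex_on UNIV \<phi>"
  shows "\<exists>a k. 0 \<le> k \<and> (\<forall>x. - a - k * norm x \<le> \<phi> x)"
proof -
  have cont: "continuous_on UNIV \<phi>" by (rule convex_on_continuous[OF open_UNIV cv])
  have "compact (\<phi> ` cball 0 1)"
    by (intro compact_continuous_image continuous_on_subset[OF cont]) auto
  then have "bounded (\<phi> ` cball 0 1)" by (rule compact_imp_bounded)
  then obtain Mb where Mb0: "\<forall>z\<in>\<phi> ` cball 0 1. \<bar>z\<bar> \<le> Mb" unfolding bounded_real by blast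
  then have Mb: "\<And>y. y \<in> cball 0 1 \<Longrightarrow> \<bar>\<phi> y\<bar> \<le> Mb" by blast
  have M0: "\<bar>\<phi> 0\<bar> \<le> Mb" using Mb[of 0] by simp
  show ?thesis
  proof (rule exI[of _ Mb], rule exI[of _ "Mb + \<bar>\<phi> 0\<bar>"], intro conjI allI)
    show "0 \<le> Mb + \<bar>\<phi> 0\<bar>" using M0 by simp
  next
    fix x :: 'a
    show "- Mb - (Mb + \<bar>\<phi> 0\<bar>) * norm x \<le> \<phi> x"
    proof (cases "norm x \<le> 1")
      case True
      then have "\<bar>\<phi> x\<bar> \<le> Mb" using Mb by simp
      moreover have "0 \<le> (Mb + \<bar>\<phi> 0\<bar>) * norm x" using M0 by simp
      ultimately show ?thesis by linarith
    next
      case False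
      define t where "t = norm x"
      have t: "t > 1" using False t_def by simp
      define y where "y = (- (1/t)) *\<^sub>R x"
      have "x \<noteq> 0" using t t_def by auto
      then have ny: "norm y = 1" using t unfolding y_def t_def by simp
      have "\<phi> y \<le> Mb" using Mb[of y] ny by simp
      have "(1 - t/(1+t)) *\<^sub>R x + (t/(1+t)) *\<^sub>R y = 0"
        using t unfolding y_def by (simp add: field_simps scaleR_left_distrib[symmetric])
      moreover have "\<phi> ((1 - t/(1+t)) *\<^sub>R x + (t/(1+t)) *\<^sub>R y) \<le> (1 - t/(1+t)) * \<phi> x + (t/(1+t)) * \<phi> y"
        by (rule convex_onD[OF cv]) (use t in auto)
      moreover have e1: "1 - t/(1+t) = 1/(1+t)" using t by (simp add: field_simps)
      moreover have "(1 - t/(1+t)) * \<phi> x + (t/(1+t)) * \<phi> y = (\<phi> x + t * \<phi> y) / (1+t)"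
        unfolding e1 by (simp add: add_divide_distrib)
      ultimately have "\<phi> 0 \<le> (\<phi> x + t * \<phi> y) / (1+t)"
        by simp
      then have "(1+t) * \<phi> 0 \<le> \<phi> x + t * \<phi> y"
        using t by (simp add: pos_le_divide_eq mult.commute)
      moreover have "t * \<phi> y \<le> t * Mb" using \<open>\<phi> y \<le> Mb\<close> t by simp
      moreover have "- \<bar>\<phi> 0\<bar> * (1 + t) \<le> (1+t) * \<phi> 0" using t
        by (metis abs_ge_minus_self minus_le_iff mult.commute mult_left_mono mult_minus_left less_le_not_le add_pos_pos zero_less_one less_trans)
      ultimately have "- \<bar>\<phi> 0\<bar> - t * (Mb + \<bar>\<phi> 0\<bar>) \<le> \<phi> x" by (simp add: algebra_simps)
      moreover have "- Mb \<le> - \<bar>\<phi> 0\<bar>" using M0 by simp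
      ultimately show ?thesis unfolding t_def by (simp add: algebra_simps)
    qed
  qed
qed

lemma inf_comb:
  fixes F1 F2 :: "'a \<Rightarrow> real"
  assumes u: "u > 0" and v: "v > 0" and A: "\<And>y1 y2. A \<le> u * F1 y1 + v * F2 y2"
  shows "A \<le> u * (INF y. F1 y) + v * (INF y. F2 y)"
proof -
  have "(A - u * (INF y. F1 y)) / v \<le> F2 y2" for y2
  proof -
    have "(A - v * F2 y2) / u \<le> (INF y. F1 y)"
    proof (rule cINF_greatest)
      fix y1 show "(A - v * F2 y2) / u \<le> F1 y1" using A[of y1 y2] u by (simp add: field_simps)
    qed simp
    then show ?thesis using u v by (simp add: field_simps)
  qed
  then have "(A - u * (INF y. F1 y)) / v \<le> (INF y. F2 y)" by (intro cINF_greatest) auto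
  then show ?thesis using v by (simp add: field_simps)
qed

lemma infconv_approx:
  fixes \<phi> :: "'a::euclidean_space \<Rightarrow> real"
  assumes cv: "convex_on UNIV \<phi>"
  obtains \<psi> :: "nat \<Rightarrow> 'a \<Rightarrow> real" and cc L :: "nat \<Rightarrow> real" where
    "\<And>n. convex_on UNIV (\<psi> n)" "\<And>n. continuous_on UNIV (\<psi> n)"
    "\<And>n x. \<bar>\<psi> n x\<bar> \<le> cc n + L n * norm x" "\<And>n. 0 \<le> L n"
    "\<And>n x. \<psi> n x \<le> \<psi> (Suc n) x" "\<And>x. (\<lambda>n. \<psi> n x) \<longlonglongrightarrow> \<phi> x"
proof -
  obtain a k0 where k0: "0 \<le> k0" "\<And>x. - a - k0 * norm x \<le> \<phi> x"
    using convex_linear_lower[OF cv] by blast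
  have cont: "continuous_on UNIV \<phi>" by (rule convex_on_continuous[OF open_UNIV cv])
  define K where "K n = k0 + real n" for n
  have K0: "k0 \<le> K n" "0 \<le> K n" for n using k0 unfolding K_def by auto
  define \<psi> where "\<psi> n x = (INF y. \<phi> y + K n * norm (x - y))" for n x
  have LB: "- a - k0 * norm x \<le> \<phi> y + K n * norm (x - y)" for n x y
  proof -
    have "norm y \<le> norm x + norm (x - y)" by (metis norm_triangle_sub add.commute norm_minus_commute)
    then have "k0 * norm y \<le> k0 * norm x + k0 * norm (x - y)" using k0(1)
      by (metis distrib_left mult_left_mono)
    moreover have "k0 * norm (x - y) \<le> K n * norm (x - y)" using K0(1) by (simp add: mult_right_mono)
    ultimately show ?thesis using k0(2)[of y] by linarith
  qed
  have bdd: "bdd_below (range (\<lambda>y. \<phi> y + K n * norm (x - y)))" for n x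
    using LB by (intro bdd_belowI2) blast
  have le_phi: "\<psi> n x \<le> \<phi> y + K n * norm (x - y)" for n x y
    unfolding \<psi>_def by (rule cINF_lower[OF bdd]) simp
  have lip: "\<psi> n x \<le> \<psi> n x' + K n * norm (x - x')" for n x x'
  proof -
    have "\<psi> n x - K n * norm (x - x') \<le> \<psi> n x'"
      unfolding \<psi>_def[of n x']
    proof (rule cINF_greatest)
      fix y
      have "norm (x - y) \<le> norm (x - x') + norm (x' - y)" by (metis norm_triangle_ineq diff_add_cancel add_diff_eq)
      then have "K n * norm (x - y) \<le> K n * norm (x - x') + K n * norm (x' - y)"
        using K0(2) by (metis distrib_left mult_left_mono)
      then show "\<psi> n x - K n * norm (x - x') \<le> \<phi> y + K n * norm (x' - y)"
        using le_phi[of n x y] by linarith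
    qed simp
    then show ?thesis by linarith
  qed
  have lip2: "\<bar>\<psi> n x - \<psi> n x'\<bar> \<le> K n * norm (x - x')" for n x x'
    using lip[of n x x'] lip[of n x' x] by (simp add: abs_le_iff norm_minus_commute)
  show ?thesis
  proof
    fix n
    show "convex_on UNIV (\<psi> n)"
    proof (rule convex_onI)
      fix t :: real and x1 x2 :: 'a assume t: "0 < t" "t < 1"
      define z where "z = (1 - t) *\<^sub>R x1 + t *\<^sub>R x2"
      have "\<psi> n z \<le> (1 - t) * (\<phi> y1 + K n * norm (x1 - y1)) + t * (\<phi> y2 + K n * norm (x2 - y2))" for y1 y2
      proof -
        define y where "y = (1 - t) *\<^sub>R y1 + t *\<^sub>R y2"
        have "\<phi> y \<le> (1 - t) * \<phi> y1 + t * \<phi> y2" unfolding y_def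
          by (rule convex_onD[OF cv]) (use t in auto)
        moreover have "z - y = (1 - t) *\<^sub>R (x1 - y1) + t *\<^sub>R (x2 - y2)"
          unfolding z_def y_def by (simp add: algebra_simps)
        then have "norm (z - y) \<le> (1 - t) * norm (x1 - y1) + t * norm (x2 - y2)"
          using t by (metis abs_of_pos diff_gt_0_iff_gt norm_scaleR norm_triangle_ineq)
        then have "K n * norm (z - y) \<le> K n * ((1 - t) * norm (x1 - y1) + t * norm (x2 - y2))"
          by (rule mult_left_mono[OF _ K0(2)])
        ultimately have "\<phi> y + K n * norm (z - y) \<le> (1 - t) * (\<phi> y1 + K n * norm (x1 - y1)) + t * (\<phi> y2 + K n * norm (x2 - y2))"
          by (simp add: algebra_simps)
        then show ?thesis using le_phi[of n z y] by linarith
      qed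
      then have "\<psi> n z \<le> (1 - t) * (INF y. \<phi> y + K n * norm (x1 - y)) + t * (INF y. \<phi> y + K n * norm (x2 - y))"
        by (intro inf_comb) (use t in auto)
      then show "\<psi> n ((1 - t) *\<^sub>R x1 + t *\<^sub>R x2) \<le> (1 - t) * \<psi> n x1 + t * \<psi> n x2"
        unfolding z_def \<psi>_def .
    qed simp
  next
    fix n
    show "continuous_on UNIV (\<psi> n)"
    proof (rule lipschitz_on_continuous_on)
      show "(K n)-lipschitz_on UNIV (\<psi> n)"
        by (rule lipschitz_onI) (use lip2 K0 in \<open>auto simp: dist_norm\<close>)
    qed
  next
    fix n x
    show "\<bar>\<psi> n x\<bar> \<le> \<bar>\<psi> n 0\<bar> + K n * norm x"
      using lip2[of n x 0] abs_triangle_ineq2[of "\<psi> n x" "\<psi> n 0"] by simp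
  next
    fix n show "0 \<le> K n" by (rule K0)
  next
    fix n x
    show "\<psi> n x \<le> \<psi> (Suc n) x"
      unfolding \<psi>_def[of "Suc n"]
    proof (rule cINF_greatest)
      fix y
      have "K n * norm (x - y) \<le> K (Suc n) * norm (x - y)" unfolding K_def by (simp add: mult_right_mono)
      then show "\<psi> n x \<le> \<phi> y + K (Suc n) * norm (x - y)" using le_phi[of n x y] by linarith
    qed simp
  next
    fix x
    show "(\<lambda>n. \<psi> n x) \<longlonglongrightarrow> \<phi> x"
    proof (rule LIMSEQ_I)
      fix e :: real assume e: "e > 0"
      obtain d where d: "d > 0" "\<And>y. dist y x < d \<Longrightarrow> dist (\<phi> y) (\<phi> x) < e/2"
        using cont e unfolding continuous_on_iff by (metis UNIV_I half_gt_zero)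
      obtain N :: nat where N: "(\<phi> x + a + k0 * norm x) / d < real N"
        using reals_Archimedean2 by blast
      show "\<exists>no. \<forall>n\<ge>no. norm (\<psi> n x - \<phi> x) < e"
      proof (intro exI allI impI)
        fix n assume n: "N \<le> n"
        have "\<phi> x - e/2 \<le> \<psi> n x" unfolding \<psi>_def
        proof (rule cINF_greatest)
          fix y
          show "\<phi> x - e/2 \<le> \<phi> y + K n * norm (x - y)"
          proof (cases "dist y x < d")
            case True
            then have "\<phi> x - e/2 < \<phi> y" using d(2)[OF True] unfolding dist_real_def by linarith
            moreover have "0 \<le> K n * norm (x - y)" using K0(2) by simp
            ultimately show ?thesis by linarith
          next
            case False
            then have dy: "d \<le> norm (x - y)" by (simp add: dist_norm norm_minus_commute)
            have "norm y \<le> norm x + norm (x - y)" by (metis norm_triangle_sub add.commute norm_minus_commute)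
            then have "k0 * norm y \<le> k0 * norm x + k0 * norm (x - y)" using k0(1)
              by (metis distrib_left mult_left_mono)
            moreover have "K n * norm (x - y) = k0 * norm (x - y) + real n * norm (x - y)"
              unfolding K_def by (simp add: algebra_simps)
            moreover have "real N * d \<le> real n * norm (x - y)"
              using n dy d(1) by (intro mult_mono) auto
            moreover have "\<phi> x + a + k0 * norm x < real N * d" using N d(1) by (simp add: field_simps)
            ultimately show ?thesis using k0(2)[of y] e by linarith
          qed
        qed simp
        moreover have "\<psi> n x \<le> \<phi> x" using le_phi[of n x x] by simp
        ultimately show "norm (\<psi> n x - \<phi> x) < e" using e by simp
      qed
    qed
  qed
qed

lemma P1D:
  assumes "M \<in> P1"
  shows "sets M = sets borel" "prob_space M" "integrable M (\<lambda>x. norm x)"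
  using assms unfolding P1_def by auto

lemma meas_P1:
  assumes "M \<in> P1" "g \<in> borel_measurable borel"
  shows "g \<in> borel_measurable M"
  using assms(2) by (subst measurable_cong_sets[OF P1D(1)[OF assms(1)] refl])

lemma integrable_lin:
  fixes \<psi> :: "'a::euclidean_space \<Rightarrow> real"
  assumes M: "M \<in> P1" and m: "\<psi> \<in> borel_measurable borel"
    and b: "\<And>x. \<bar>\<psi> x\<bar> \<le> a + L * norm x" and L: "0 \<le> L"
  shows "integrable M \<psi>"
proof -
  interpret prob_space M using P1D(2)[OF M] .
  have ic: "integrable M (\<lambda>x. a)" by simp
  have "integrable M (\<lambda>x. a + L * norm x)"
    by (rule Bochner_Integration.integrable_add[OF ic integrable_mult_right[OF P1D(3)[OF M]]])
  moreover have "\<psi> \<in> borel_measurable M" by (rule meas_P1[OF M m])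
  moreover have "AE x in M. norm (\<psi> x) \<le> norm (a + L * norm x)"
    using b by (intro AE_I2) (auto intro: order.trans[OF _ abs_ge_self])
  ultimately show ?thesis by (rule Bochner_Integration.integrable_bound)
qed

lemma e2ennreal_less_iff: "0 \<le> x \<Longrightarrow> (y < e2ennreal x) \<longleftrightarrow> (enn2ereal y < x)"
  by (metis enn2ereal_e2ennreal less_ennreal.rep_eq)

lemma fatou_ereal:
  fixes u :: "nat \<Rightarrow> 'b \<Rightarrow> ereal" and v :: "'b \<Rightarrow> ereal"
  assumes um: "\<And>k. u k \<in> borel_measurable \<Omega>" and vm: "v \<in> borel_measurable \<Omega>"
    and u0: "\<And>k \<omega>. 0 \<le> u k \<omega>"
    and ev: "AE \<omega> in \<Omega>. \<forall>c. c < v \<omega> \<longrightarrow> (\<forall>\<^sub>F k in sequentially. c < u k \<omega>)"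
  shows "(\<integral>\<^sup>+\<omega>. e2ennreal (v \<omega>) \<partial>\<Omega>) \<le> liminf (\<lambda>k. \<integral>\<^sup>+\<omega>. e2ennreal (u k \<omega>) \<partial>\<Omega>)"
proof -
  have "(\<integral>\<^sup>+\<omega>. e2ennreal (v \<omega>) \<partial>\<Omega>) \<le> (\<integral>\<^sup>+\<omega>. liminf (\<lambda>k. e2ennreal (u k \<omega>)) \<partial>\<Omega>)"
  proof (rule nn_integral_mono_AE)
    show "AE \<omega> in \<Omega>. e2ennreal (v \<omega>) \<le> liminf (\<lambda>k. e2ennreal (u k \<omega>))"
      using ev
    proof eventually_elim
      case (elim \<omega>)
      show ?case unfolding le_Liminf_iff
      proof (intro allI impI)
        fix y assume y: "y < e2ennreal (v \<omega>)"
        have "enn2ereal y < v \<omega>"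
        proof (rule ccontr)
          assume "\<not> enn2ereal y < v \<omega>"
          then have "e2ennreal (v \<omega>) \<le> e2ennreal (enn2ereal y)" by (intro e2ennreal_mono) simp
          then show False using y by simp
        qed
        then have "\<forall>\<^sub>F k in sequentially. enn2ereal y < u k \<omega>" using elim by blast
        then show "\<forall>\<^sub>F k in sequentially. y < e2ennreal (u k \<omega>)"
          by eventually_elim (simp add: e2ennreal_less_iff u0)
      qed
    qed
  qed
  also have "\<dots> \<le> liminf (\<lambda>k. \<integral>\<^sup>+\<omega>. e2ennreal (u k \<omega>) \<partial>\<Omega>)"
    by (rule nn_integral_liminf) (use um in measurable)
  finally show ?thesis .
qed

lemma comb_tendsto:
  fixes f :: "'a::euclidean_space \<Rightarrow> ereal" and \<psi> :: "'a \<Rightarrow> real"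
  assumes lsc: "lsc f" and ninf: "\<forall>x. f x \<noteq> -\<infinity>" and e: "0 < e"
    and cont: "continuous_on UNIV \<psi>" and X: "X \<longlonglongrightarrow> x"
    and c: "c < ereal e * (f x + ereal C) + ereal (K - \<psi> x)"
  shows "\<forall>\<^sub>F n in sequentially. c < ereal e * (f (X n) + ereal C) + ereal (K - \<psi> (X n))"
proof (cases c)
  case MInf
  have "ereal e * (f y + ereal C) + ereal (K - \<psi> y) \<noteq> -\<infinity>" for y
    using ninf[rule_format, of y] e by (cases "f y") auto
  then show ?thesis using MInf by (intro always_eventually allI) (simp add: ereal_infty_less)
next
  case PInf then show ?thesis using c by simp
next
  case (real q)
  define q' where "q' = q - (K - \<psi> x)"
  have "ereal q' < ereal e * (f x + ereal C)"
    using c real e unfolding q'_def by (cases "f x") auto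
  then obtain z where z0: "ereal q' < ereal z" "ereal z < ereal e * (f x + ereal C)"
    using ereal_dense2 by blast
  then have z: "q' < z" "ereal z < ereal e * (f x + ereal C)" by auto
  have fz: "ereal (z / e - C) < f x"
    using z(2) e ninf by (cases "f x") (auto simp: field_simps)
  have ev1: "\<forall>\<^sub>F n in sequentially. ereal (z / e - C) < f (X n)"
    by (rule lsc_tendsto[OF lsc fz X])
  have "(\<lambda>n. \<psi> (X n)) \<longlonglongrightarrow> \<psi> x"
    using cont X by (intro isCont_tendsto_compose[of x \<psi>]) (auto simp: continuous_on_eq_continuous_at)
  then have ev2: "\<forall>\<^sub>F n in sequentially. dist (\<psi> (X n)) (\<psi> x) < z - q'"
    using z(1) by (intro tendstoD) auto
  from ev1 ev2 show ?thesis
  proof eventually_elim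
    case (elim n)
    show ?case
    proof (cases "f (X n)")
      case (real r)
      then have "z < e * (r + C)" using elim(1) e by (simp add: field_simps)
      moreover have "\<psi> (X n) < \<psi> x + (z - q')" using elim(2) by (simp add: dist_real_def abs_less_iff)
      ultimately show ?thesis using real \<open>c = ereal q\<close> unfolding q'_def by simp
    next
      case PInf then show ?thesis using e \<open>c = ereal q\<close> by simp
    next
      case MInf then show ?thesis using ninf by simp
    qed
  qed
qed

lemma mono_conv_eint:
  fixes \<psi> :: "nat \<Rightarrow> 'a::euclidean_space \<Rightarrow> real" and \<phi> :: "'a \<Rightarrow> real"
  assumes M: "M \<in> P1" and \<phi>m: "\<phi> \<in> borel_measurable borel"
    and int: "\<And>n. integrable M (\<psi> n)"
    and mono: "\<And>n x. \<psi> n x \<le> \<psi> (Suc n) x" and lim: "\<And>x. (\<lambda>n. \<psi> n x) \<longlonglongrightarrow> \<phi> x"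
  shows "(\<lambda>n. ereal (\<integral>x. \<psi> n x \<partial>M)) \<longlonglongrightarrow> eint M (\<lambda>x. ereal (\<phi> x))"
proof -
  have inc: "incseq (\<lambda>n. \<psi> n x)" for x by (rule incseq_SucI) (rule mono)
  have le0: "\<psi> 0 x \<le> \<psi> n x" for n x using incseq_SucD inc[of x] by (simp add: incseq_def)
  have le0': "\<psi> 0 x \<le> \<phi> x" for x
    by (rule LIMSEQ_le_const[OF lim]) (use le0 in auto)
  have pm: "\<psi> n \<in> borel_measurable M" for n using int by auto
  have \<phi>M: "\<phi> \<in> borel_measurable M" by (rule meas_P1[OF M \<phi>m])
  have e1: "eint M (\<lambda>x. ereal (\<phi> x)) = enn2ereal (\<integral>\<^sup>+ x. e2ennreal (ereal (\<phi> x) - ereal (\<psi> 0 x)) \<partial>M) + ereal (\<integral>x. \<psi> 0 x \<partial>M)"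
    by (rule eint_lower[OF _ int[of 0]]) (use \<phi>M le0' in auto)
  define F where "F n x = ennreal (\<psi> n x - \<psi> 0 x)" for n x
  have "incseq F"
    by (intro monoI le_funI) (simp add: F_def ennreal_leI incseq_def inc[THEN incseqD])
  moreover have "F n \<in> borel_measurable M" for n unfolding F_def using pm by measurable
  moreover have "(\<lambda>n. F n x) \<longlonglongrightarrow> ennreal (\<phi> x - \<psi> 0 x)" for x
    unfolding F_def by (intro tendsto_ennrealI tendsto_diff lim tendsto_const)
  ultimately have l1: "(\<lambda>n. integral\<^sup>N M (F n)) \<longlonglongrightarrow> (\<integral>\<^sup>+x. ennreal (\<phi> x - \<psi> 0 x) \<partial>M)"
    by (rule nn_integral_LIMSEQ)
  have iF: "integral\<^sup>N M (F n) = ennreal ((\<integral>x. \<psi> n x \<partial>M) - (\<integral>x. \<psi> 0 x \<partial>M))" for n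
  proof -
    have "integral\<^sup>N M (F n) = ennreal (\<integral>x. \<psi> n x - \<psi> 0 x \<partial>M)"
      unfolding F_def by (rule nn_integral_eq_integral) (use int le0 in auto)
    then show ?thesis using int by (simp add: Bochner_Integration.integral_diff)
  qed
  have nn: "0 \<le> (\<integral>x. \<psi> n x \<partial>M) - (\<integral>x. \<psi> 0 x \<partial>M)" for n
    using integral_mono[OF int[of 0] int[of n] le0] by simp
  have "(\<lambda>n. enn2ereal (integral\<^sup>N M (F n))) \<longlonglongrightarrow> enn2ereal (\<integral>\<^sup>+x. ennreal (\<phi> x - \<psi> 0 x) \<partial>M)"
    by (rule tendsto_enn2erealI[OF l1])
  moreover have eq: "enn2ereal (integral\<^sup>N M (F n)) = ereal ((\<integral>x. \<psi> n x \<partial>M) - (\<integral>x. \<psi> 0 x \<partial>M))" for n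
    unfolding iF using nn[of n] by simp
  ultimately have l2: "(\<lambda>n. ereal ((\<integral>x. \<psi> n x \<partial>M) - (\<integral>x. \<psi> 0 x \<partial>M))) \<longlonglongrightarrow> enn2ereal (\<integral>\<^sup>+x. ennreal (\<phi> x - \<psi> 0 x) \<partial>M)"
    by simp
  have l3: "(\<lambda>n. ereal ((\<integral>x. \<psi> n x \<partial>M) - (\<integral>x. \<psi> 0 x \<partial>M)) + ereal (\<integral>x. \<psi> 0 x \<partial>M))
        \<longlonglongrightarrow> enn2ereal (\<integral>\<^sup>+x. ennreal (\<phi> x - \<psi> 0 x) \<partial>M) + ereal (\<integral>x. \<psi> 0 x \<partial>M)"
    by (rule tendsto_add_ereal_general1[OF _ l2 tendsto_const]) simp
  have eqn: "ereal ((\<integral>x. \<psi> n x \<partial>M) - (\<integral>x. \<psi> 0 x \<partial>M)) + ereal (\<integral>x. \<psi> 0 x \<partial>M) = ereal (\<integral>x. \<psi> n x \<partial>M)" for n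
    by simp
  have eqi: "(\<integral>\<^sup>+x. ennreal (\<phi> x - \<psi> 0 x) \<partial>M) = (\<integral>\<^sup>+ x. e2ennreal (ereal (\<phi> x) - ereal (\<psi> 0 x)) \<partial>M)"
    by simp
  from l3 show ?thesis unfolding eqn eqi e1[symmetric] .
qed

lemma e2ennreal_cmult:
  assumes "0 < e" "0 \<le> y"
  shows "e2ennreal (ereal e * y) = ennreal e * e2ennreal y"
proof (cases y)
  case (real r)
  then show ?thesis using assms by (simp add: ennreal_mult)
next
  case PInf
  then show ?thesis using assms by (simp add: ennreal_mult_top)
next
  case MInf
  then show ?thesis using assms by simp
qed

lemma key_nonneg:
  fixes f :: "'a::euclidean_space \<Rightarrow> ereal" and \<psi> :: "'a \<Rightarrow> real"
  assumes C0: "0 \<le> C" and fC: "\<And>x. ereal (norm x - C) \<le> f x" and e: "0 < e"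
    and R: "\<And>x. R \<le> norm x \<Longrightarrow> ereal ((L / e) * norm x) \<le> f x"
    and bd: "\<And>x. \<bar>\<psi> x\<bar> \<le> a + L * norm x" and L: "0 \<le> L" and R0: "0 \<le> R"
  shows "0 \<le> ereal e * (f x + ereal C) + ereal ((a + L * R) - \<psi> x)"
proof (cases "f x")
  case (real r)
  have r1: "norm x - C \<le> r" using fC[of x] real by simp
  have "0 \<le> r + C" using r1 norm_ge_zero[of x] by linarith
  then have h1: "0 \<le> e * (r + C)" using e by simp
  show ?thesis
  proof (cases "R \<le> norm x")
    case True
    have "(L / e) * norm x \<le> r" using R[OF True] real by simp
    then have "e * ((L / e) * norm x) \<le> e * r" using e by (intro mult_left_mono) auto
    then have "L * norm x \<le> e * r" using e by simp
    moreover have "e * r \<le> e * (r + C)" using e C0 by (intro mult_left_mono) auto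
    moreover have "\<psi> x \<le> a + L * norm x" using bd[of x] by linarith
    moreover have "0 \<le> L * R" using L R0 by simp
    ultimately show ?thesis using real by simp
  next
    case False
    then have "L * R \<ge> L * norm x" using L by (intro mult_left_mono) auto
    moreover have "\<psi> x \<le> a + L * norm x" using bd[of x] by linarith
    ultimately show ?thesis using real h1 by simp
  qed
next
  case PInf then show ?thesis using e by simp
next
  case MInf then show ?thesis using fC[of x] by simp
qed

lemma key_K:
  fixes f :: "'a::euclidean_space \<Rightarrow> ereal" and \<psi> :: "'a \<Rightarrow> real"
    and Xs :: "nat \<Rightarrow> 'b \<Rightarrow> 'a" and X :: "'b \<Rightarrow> 'a"
  assumes lsc: "lsc f" and ninf: "\<forall>x. f x \<noteq> -\<infinity>" and sl: "superlinear f" and C0: "0 \<le> C"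
    and fC: "\<And>x. ereal (norm x - C) \<le> f x"
    and \<Omega>: "prob_space \<Omega>" and Xsm: "\<And>k. Xs k \<in> borel_measurable \<Omega>" and Xm: "X \<in> borel_measurable \<Omega>"
    and conv: "AE \<omega> in \<Omega>. (\<lambda>k. Xs k \<omega>) \<longlonglongrightarrow> X \<omega>"
    and B0: "0 \<le> B" and Bk: "\<And>k. (\<integral>\<^sup>+\<omega>. e2ennreal (f (Xs k \<omega>) + ereal C) \<partial>\<Omega>) \<le> ennreal B"
    and intk: "\<And>k. integrable \<Omega> (\<lambda>\<omega>. \<psi> (Xs k \<omega>))" and intX: "integrable \<Omega> (\<lambda>\<omega>. \<psi> (X \<omega>))"
    and cont: "continuous_on UNIV \<psi>" and bd: "\<And>x. \<bar>\<psi> x\<bar> \<le> a + L * norm x" and L: "0 \<le> L"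
    and cle: "\<And>k. c \<le> (\<integral>\<omega>. \<psi> (Xs k \<omega>) \<partial>\<Omega>)"
  shows "c \<le> (\<integral>\<omega>. \<psi> (X \<omega>) \<partial>\<Omega>)"
proof (rule field_le_epsilon)
  interpret P: prob_space \<Omega> by (rule \<Omega>)
  fix \<delta> :: real assume \<delta>: "0 < \<delta>"
  define e where "e = \<delta> / (B + 1)"
  have e: "0 < e" unfolding e_def using \<delta> B0 by simp
  have eB: "e * B \<le> \<delta>" unfolding e_def using \<delta> B0 by (simp add: field_simps)
  obtain R where R: "R > 0" "\<And>x. R \<le> norm x \<Longrightarrow> ereal ((L / e) * norm x) \<le> f x"
    using superlinearD[OF sl, of "L / e"] by blast
  define K where "K = a + L * R"
  have fm[measurable]: "f \<in> borel_measurable borel" by (rule lsc_measurable[OF lsc])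
  have \<psi>m[measurable]: "\<psi> \<in> borel_measurable borel" by (rule borel_measurable_continuous_onI[OF cont])
  note Xsm[measurable] Xm[measurable]
  have nonneg: "0 \<le> ereal e * (f x + ereal C) + ereal (K - \<psi> x)" for x
    unfolding K_def by (rule key_nonneg[OF C0 fC e R(2) bd L less_imp_le[OF R(1)]])
  have fC0: "0 \<le> f x + ereal C" for x
  proof -
    have "ereal (norm x - C) + ereal C \<le> f x + ereal C" using fC[of x] by (rule add_right_mono)
    moreover have "0 \<le> ereal (norm x - C) + ereal C" by simp
    ultimately show ?thesis by (rule order.trans[rotated])
  qed
  have h0: "0 \<le> ereal e * (f x + ereal C)" for x using fC0[of x] e by simp
  have ident: "enn2ereal (\<integral>\<^sup>+\<omega>. e2ennreal (ereal e * (f (Y \<omega>) + ereal C) + ereal (K - \<psi> (Y \<omega>))) \<partial>\<Omega>)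
      = ereal e * enn2ereal (\<integral>\<^sup>+\<omega>. e2ennreal (f (Y \<omega>) + ereal C) \<partial>\<Omega>) + ereal (K - (\<integral>\<omega>. \<psi> (Y \<omega>) \<partial>\<Omega>))"
    if Ym: "Y \<in> borel_measurable \<Omega>" and iY: "integrable \<Omega> (\<lambda>\<omega>. \<psi> (Y \<omega>))" for Y
  proof -
    have iK: "integrable \<Omega> (\<lambda>\<omega>. K - \<psi> (Y \<omega>))" using iY by simp
    have "enn2ereal (\<integral>\<^sup>+\<omega>. e2ennreal (ereal e * (f (Y \<omega>) + ereal C) + ereal (K - \<psi> (Y \<omega>))) \<partial>\<Omega>)
        = enn2ereal (\<integral>\<^sup>+\<omega>. e2ennreal (ereal e * (f (Y \<omega>) + ereal C)) \<partial>\<Omega>) + ereal (\<integral>\<omega>. K - \<psi> (Y \<omega>) \<partial>\<Omega>)"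
      by (rule nn_add_int[OF _ iK]) (use Ym h0 nonneg in auto)
    also have "(\<integral>\<^sup>+\<omega>. e2ennreal (ereal e * (f (Y \<omega>) + ereal C)) \<partial>\<Omega>) = ennreal e * (\<integral>\<^sup>+\<omega>. e2ennreal (f (Y \<omega>) + ereal C) \<partial>\<Omega>)"
      using e fC0 Ym by (simp add: e2ennreal_cmult nn_integral_cmult)
    also have "enn2ereal (ennreal e * (\<integral>\<^sup>+\<omega>. e2ennreal (f (Y \<omega>) + ereal C) \<partial>\<Omega>)) = ereal e * enn2ereal (\<integral>\<^sup>+\<omega>. e2ennreal (f (Y \<omega>) + ereal C) \<partial>\<Omega>)"
      using e by (simp add: times_ennreal.rep_eq)
    also have "(\<integral>\<omega>. K - \<psi> (Y \<omega>) \<partial>\<Omega>) = K - (\<integral>\<omega>. \<psi> (Y \<omega>) \<partial>\<Omega>)"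
      using iY by (simp add: Bochner_Integration.integral_diff P.prob_space)
    finally show ?thesis .
  qed
  define u where "u k \<omega> = ereal e * (f (Xs k \<omega>) + ereal C) + ereal (K - \<psi> (Xs k \<omega>))" for k \<omega>
  define v where "v \<omega> = ereal e * (f (X \<omega>) + ereal C) + ereal (K - \<psi> (X \<omega>))" for \<omega>
  have ubr: "enn2ereal (\<integral>\<^sup>+\<omega>. e2ennreal (u k \<omega>) \<partial>\<Omega>) \<le> ereal (e * B + K - c)" for k
  proof -
    have "enn2ereal (\<integral>\<^sup>+\<omega>. e2ennreal (f (Xs k \<omega>) + ereal C) \<partial>\<Omega>) \<le> ereal B"
      using Bk[of k] B0 by (metis enn2ereal_ennreal less_eq_ennreal.rep_eq)
    then have "ereal e * enn2ereal (\<integral>\<^sup>+\<omega>. e2ennreal (f (Xs k \<omega>) + ereal C) \<partial>\<Omega>) \<le> ereal e * ereal B"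
      using e by (intro ereal_mult_left_mono) auto
    then have "enn2ereal (\<integral>\<^sup>+\<omega>. e2ennreal (u k \<omega>) \<partial>\<Omega>) \<le> ereal (e * B) + ereal (K - (\<integral>\<omega>. \<psi> (Xs k \<omega>) \<partial>\<Omega>))"
      unfolding u_def ident[OF Xsm intk] by (intro add_right_mono) simp
    also have "\<dots> \<le> ereal (e * B + K - c)" using cle[of k] by simp
    finally show ?thesis .
  qed
  have ub: "(\<integral>\<^sup>+\<omega>. e2ennreal (u k \<omega>) \<partial>\<Omega>) \<le> e2ennreal (ereal (e * B + K - c))" for k
  proof -
    have "e2ennreal (enn2ereal (\<integral>\<^sup>+\<omega>. e2ennreal (u k \<omega>) \<partial>\<Omega>)) \<le> e2ennreal (ereal (e * B + K - c))"
      by (rule e2ennreal_mono[OF ubr])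
    then show ?thesis by simp
  qed
  have nnc: "0 \<le> e * B + K - c"
  proof -
    have "0 \<le> enn2ereal (\<integral>\<^sup>+\<omega>. e2ennreal (u 0 \<omega>) \<partial>\<Omega>)" by simp
    then have "0 \<le> ereal (e * B + K - c)" using ubr[of 0] by (rule order.trans)
    then show ?thesis by simp
  qed
  have "(\<integral>\<^sup>+\<omega>. e2ennreal (v \<omega>) \<partial>\<Omega>) \<le> liminf (\<lambda>k. \<integral>\<^sup>+\<omega>. e2ennreal (u k \<omega>) \<partial>\<Omega>)"
  proof (rule fatou_ereal)
    show "u k \<in> borel_measurable \<Omega>" for k unfolding u_def by measurable
    show "v \<in> borel_measurable \<Omega>" unfolding v_def by measurable
    show "0 \<le> u k \<omega>" for k \<omega> unfolding u_def by (rule nonneg)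
    show "AE \<omega> in \<Omega>. \<forall>c. c < v \<omega> \<longrightarrow> (\<forall>\<^sub>F k in sequentially. c < u k \<omega>)"
      using conv
    proof eventually_elim
      case (elim \<omega>)
      show ?case unfolding u_def v_def
        by (intro allI impI comb_tendsto[OF lsc ninf e cont elim])
    qed
  qed
  also have "\<dots> \<le> e2ennreal (ereal (e * B + K - c))"
    by (rule Liminf_le) (use ub in auto)
  finally have "enn2ereal (\<integral>\<^sup>+\<omega>. e2ennreal (v \<omega>) \<partial>\<Omega>) \<le> enn2ereal (e2ennreal (ereal (e * B + K - c)))"
    by (simp add: less_eq_ennreal.rep_eq)
  also have "\<dots> = ereal (e * B + K - c)" using nnc by (simp add: enn2ereal_e2ennreal)
  finally have v1: "enn2ereal (\<integral>\<^sup>+\<omega>. e2ennreal (v \<omega>) \<partial>\<Omega>) \<le> ereal (e * B + K - c)" .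
  have "ereal (K - (\<integral>\<omega>. \<psi> (X \<omega>) \<partial>\<Omega>)) \<le> enn2ereal (\<integral>\<^sup>+\<omega>. e2ennreal (v \<omega>) \<partial>\<Omega>)"
  proof -
    have "0 \<le> ereal e * enn2ereal (\<integral>\<^sup>+\<omega>. e2ennreal (f (X \<omega>) + ereal C) \<partial>\<Omega>)" using e by simp
    then show ?thesis unfolding v_def ident[OF Xm intX] by (simp add: add_increasing)
  qed
  from this v1 have "ereal (K - (\<integral>\<omega>. \<psi> (X \<omega>) \<partial>\<Omega>)) \<le> ereal (e * B + K - c)" by (rule order.trans)
  then have "K - (\<integral>\<omega>. \<psi> (X \<omega>) \<partial>\<Omega>) \<le> e * B + K - c" by simp
  then show "c \<le> (\<integral>\<omega>. \<psi> (X \<omega>) \<partial>\<Omega>) + \<delta>" using eB by linarith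
qed

theorem corollary4p4:
  fixes \<mu> \<nu> :: "('a::euclidean_space) measure" and f :: "'a \<Rightarrow> ereal"
  assumes "\<mu> \<in> P1" and "\<nu> \<in> P1"
    and "barycentre \<mu> = barycentre \<nu>"
    and "\<forall>x. f x \<noteq> -\<infinity>"
    and "ereal_convex f" and "lsc f" and "superlinear f"
    and "(INF \<rho> \<in> {\<rho> \<in> P1. convex_le \<mu> \<rho> \<and> convex_le \<nu> \<rho>}. eint \<rho> f) < \<infinity>"
  shows "\<exists>\<rho>\<in>{\<rho> \<in> P1. convex_le \<mu> \<rho> \<and> convex_le \<nu> \<rho>}.
           eint \<rho> f = (INF \<rho> \<in> {\<rho> \<in> P1. convex_le \<mu> \<rho> \<and> convex_le \<nu> \<rho>}. eint \<rho> f)"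
proof -
  note ninf = assms(4) and lsc = assms(6) and sl = assms(7)
  define S where "S = {\<rho> \<in> P1. convex_le \<mu> \<rho> \<and> convex_le \<nu> \<rho>}"
  define I where "I = (INF \<rho>\<in>S. eint \<rho> f)"
  obtain C where C: "0 \<le> C" "\<And>x. ereal (norm x - C) \<le> f x"
    using lower_bound[OF lsc sl ninf] by blast
  have fm[measurable]: "f \<in> borel_measurable borel" by (rule lsc_measurable[OF lsc])
  have G0: "ereal (norm x) \<le> f x + ereal C" for x
  proof -
    have "ereal (norm x - C) + ereal C \<le> f x + ereal C" using C(2)[of x] by (rule add_right_mono)
    then show ?thesis by simp
  qed
  have G0': "ennreal (norm x) \<le> e2ennreal (f x + ereal C)" for x
    using e2ennreal_mono[OF G0[of x]] by simp
  have eintG: "eint \<rho> f = enn2ereal (\<integral>\<^sup>+x. e2ennreal (f x + ereal C) \<partial>\<rho>) - ereal C" if \<rho>: "\<rho> \<in> P1" for \<rho>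
  proof -
    interpret prob_space \<rho> using P1D(2)[OF \<rho>] .
    have "eint \<rho> f = enn2ereal (\<integral>\<^sup>+x. e2ennreal (f x - ereal (- C)) \<partial>\<rho>) + ereal (\<integral>x. - C \<partial>\<rho>)"
    proof (rule eint_lower)
      show "f \<in> borel_measurable \<rho>" by (rule meas_P1[OF \<rho> fm])
      show "integrable \<rho> (\<lambda>x. - C)" by simp
      fix x :: 'a assume "x \<in> space \<rho>"
      have "ereal (- C) \<le> ereal (norm x - C)" by simp
      then show "ereal (- C) \<le> f x" using C(2)[of x] by (rule order.trans)
    qed
    moreover have e2: "(\<integral>x. - C \<partial>\<rho>) = - C" using prob_space by simp
    moreover have "f x - ereal (- C) = f x + ereal C" for x by (cases "f x") auto
    ultimately have "eint \<rho> f = enn2ereal (\<integral>\<^sup>+x. e2ennreal (f x + ereal C) \<partial>\<rho>) + ereal (- C)"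
      by (simp only:)
    then show ?thesis by (simp add: minus_ereal_def)
  qed
  have Ilow: "ereal (- C) \<le> I"
    unfolding I_def
  proof (rule INF_greatest)
    fix \<rho> assume "\<rho> \<in> S"
    then have "\<rho> \<in> P1" unfolding S_def by simp
    have nn: "0 \<le> enn2ereal (\<integral>\<^sup>+x. e2ennreal (f x + ereal C) \<partial>\<rho>)" by simp
    then show "ereal (- C) \<le> eint \<rho> f" unfolding eintG[OF \<open>\<rho> \<in> P1\<close>]
      by (cases "enn2ereal (\<integral>\<^sup>+x. e2ennreal (f x + ereal C) \<partial>\<rho>)") auto
  qed
  have Ifin: "I < \<infinity>" using assms(8) unfolding I_def S_def .
  obtain i where Ii: "I = ereal i" using Ilow Ifin by (cases I) auto
  have iC: "- C \<le> i" using Ilow Ii by simp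
  have "\<forall>n. \<exists>\<rho>\<in>S. eint \<rho> f < ereal (i + 1 / Suc n)"
  proof
    fix n :: nat
    have "I < ereal (i + 1 / Suc n)" using Ii by simp
    then show "\<exists>\<rho>\<in>S. eint \<rho> f < ereal (i + 1 / Suc n)" unfolding I_def by (simp add: INF_less_iff)
  qed
  then obtain \<rho>s where \<rho>s: "\<And>n. \<rho>s n \<in> S" "\<And>n. eint (\<rho>s n) f < ereal (i + 1 / Suc n)"
    by metis
  have \<rho>sP: "\<rho>s n \<in> P1" for n using \<rho>s(1) unfolding S_def by simp
  have Gb: "enn2ereal (\<integral>\<^sup>+x. e2ennreal (f x + ereal C) \<partial>\<rho>s n) \<le> ereal (i + 1 / Suc n + C)" for n
  proof -
    have "enn2ereal (\<integral>\<^sup>+x. e2ennreal (f x + ereal C) \<partial>\<rho>s n) - ereal C < ereal (i + 1 / Suc n)"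
      using \<rho>s(2)[of n] unfolding eintG[OF \<rho>sP] .
    then show ?thesis
      by (cases "enn2ereal (\<integral>\<^sup>+x. e2ennreal (f x + ereal C) \<partial>\<rho>s n)") auto
  qed
  define B where "B = i + 1 + C"
  have B0: "0 \<le> B" unfolding B_def using iC by simp
  have Gb1: "(\<integral>\<^sup>+x. e2ennreal (f x + ereal C) \<partial>\<rho>s n) \<le> ennreal B" for n
  proof -
    have "ereal (i + 1 / Suc n + C) \<le> ereal B" unfolding B_def by simp
    with Gb[of n] have "enn2ereal (\<integral>\<^sup>+x. e2ennreal (f x + ereal C) \<partial>\<rho>s n) \<le> ereal B" by (rule order.trans)
    then show ?thesis using B0 by (metis enn2ereal_ennreal less_eq_ennreal.rep_eq)
  qed
  have Nb: "(\<integral>\<^sup>+x. ennreal (norm x) \<partial>\<rho>s n) \<le> ennreal B" for n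
  proof -
    have "(\<integral>\<^sup>+x. ennreal (norm x) \<partial>\<rho>s n) \<le> (\<integral>\<^sup>+x. e2ennreal (f x + ereal C) \<partial>\<rho>s n)"
      by (rule nn_integral_mono) (simp add: G0')
    then show ?thesis using Gb1[of n] by (rule order.trans)
  qed
  obtain \<Omega> :: "real measure" and r and Xs :: "nat \<Rightarrow> real \<Rightarrow> 'a" and X where
    cp: "prob_space \<Omega>" "strict_mono r" "\<And>n. Xs n \<in> borel_measurable \<Omega>"
      "\<And>n. distr \<Omega> borel (Xs n) = \<rho>s (r n)" "X \<in> borel_measurable \<Omega>"
      "AE \<omega> in \<Omega>. (\<lambda>n. Xs n \<omega>) \<longlonglongrightarrow> X \<omega>"
    using compactness[of \<rho>s "ennreal B"] P1D[OF \<rho>sP] Nb by auto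
  note Xsm[measurable] = cp(3) and Xm[measurable] = cp(5)
  interpret P: prob_space \<Omega> by (rule cp(1))
  define \<rho> where "\<rho> = distr \<Omega> borel X"
  have GXs: "(\<integral>\<^sup>+\<omega>. e2ennreal (f (Xs k \<omega>) + ereal C) \<partial>\<Omega>) = (\<integral>\<^sup>+x. e2ennreal (f x + ereal C) \<partial>\<rho>s (r k))" for k
    unfolding cp(4)[symmetric] by (rule nn_integral_distr[symmetric]) auto
  have GX: "(\<integral>\<^sup>+\<omega>. e2ennreal (f (X \<omega>) + ereal C) \<partial>\<Omega>) = (\<integral>\<^sup>+x. e2ennreal (f x + ereal C) \<partial>\<rho>)"
    unfolding \<rho>_def by (rule nn_integral_distr[symmetric]) auto
  have fatouG: "(\<integral>\<^sup>+\<omega>. e2ennreal (f (X \<omega>) + ereal C) \<partial>\<Omega>) \<le> liminf (\<lambda>k. \<integral>\<^sup>+\<omega>. e2ennreal (f (Xs k \<omega>) + ereal C) \<partial>\<Omega>)"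
  proof (rule fatou_ereal)
    show "(\<lambda>\<omega>. f (Xs k \<omega>) + ereal C) \<in> borel_measurable \<Omega>" for k by measurable
    show "(\<lambda>\<omega>. f (X \<omega>) + ereal C) \<in> borel_measurable \<Omega>" by measurable
    show "0 \<le> f (Xs k \<omega>) + ereal C" for k \<omega> using G0[of "Xs k \<omega>"] by (rule order.trans[rotated]) simp
    show "AE \<omega> in \<Omega>. \<forall>c. c < f (X \<omega>) + ereal C \<longrightarrow> (\<forall>\<^sub>F k in sequentially. c < f (Xs k \<omega>) + ereal C)"
      using cp(6)
    proof eventually_elim
      case (elim \<omega>)
      show ?case
      proof (intro allI impI)
        fix c assume "c < f (X \<omega>) + ereal C"
        then have "c < ereal 1 * (f (X \<omega>) + ereal C) + ereal (0 - (\<lambda>x. 0) (X \<omega>))" by simp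
        from comb_tendsto[OF lsc ninf zero_less_one continuous_on_const elim this]
        show "\<forall>\<^sub>F k in sequentially. c < f (Xs k \<omega>) + ereal C" by simp
      qed
    qed
  qed
  have GXb: "enn2ereal (\<integral>\<^sup>+x. e2ennreal (f x + ereal C) \<partial>\<rho>) \<le> ereal (i + C)"
  proof (rule ereal_le_epsilon2)
    fix \<delta> :: real assume \<delta>: "0 < \<delta>"
    obtain N :: nat where N: "1 / \<delta> < real N" using reals_Archimedean2 by blast
    have ev: "\<forall>\<^sub>F k in sequentially. (\<integral>\<^sup>+\<omega>. e2ennreal (f (Xs k \<omega>) + ereal C) \<partial>\<Omega>) \<le> e2ennreal (ereal (i + C + \<delta>))"
    proof (rule eventually_sequentiallyI[of N])
      fix k assume k: "N \<le> k"
      have "k \<le> r k" using seq_suble[OF cp(2)] by simp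
      then have "real N \<le> real (Suc (r k))" using k by simp
      then have "1 / \<delta> < real (Suc (r k))" using N by simp
      then have "1 / real (Suc (r k)) < \<delta>" using \<delta> by (simp add: field_simps)
      then have "ereal (i + 1 / Suc (r k) + C) \<le> ereal (i + C + \<delta>)" by simp
      with Gb[of "r k"] have "enn2ereal (\<integral>\<^sup>+x. e2ennreal (f x + ereal C) \<partial>\<rho>s (r k)) \<le> ereal (i + C + \<delta>)"
        by (rule order.trans)
      then have "e2ennreal (enn2ereal (\<integral>\<^sup>+x. e2ennreal (f x + ereal C) \<partial>\<rho>s (r k))) \<le> e2ennreal (ereal (i + C + \<delta>))"
        by (rule e2ennreal_mono)
      then show "(\<integral>\<^sup>+\<omega>. e2ennreal (f (Xs k \<omega>) + ereal C) \<partial>\<Omega>) \<le> e2ennreal (ereal (i + C + \<delta>))"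
        unfolding GXs by simp
    qed
    have "(\<integral>\<^sup>+x. e2ennreal (f x + ereal C) \<partial>\<rho>) \<le> e2ennreal (ereal (i + C + \<delta>))"
      unfolding GX[symmetric] using fatouG Liminf_le[OF _ ev] by (meson order.trans sequentially_bot)
    then have "enn2ereal (\<integral>\<^sup>+x. e2ennreal (f x + ereal C) \<partial>\<rho>) \<le> enn2ereal (e2ennreal (ereal (i + C + \<delta>)))"
      by (simp add: less_eq_ennreal.rep_eq)
    also have "\<dots> = ereal (i + C + \<delta>)" using iC \<delta> by (intro enn2ereal_e2ennreal) simp
    finally show "enn2ereal (\<integral>\<^sup>+x. e2ennreal (f x + ereal C) \<partial>\<rho>) \<le> ereal (i + C) + ereal \<delta>" by simp
  qed
  have \<rho>P: "\<rho> \<in> P1"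
  proof -
    have "sets \<rho> = sets borel" unfolding \<rho>_def by simp
    moreover have "prob_space \<rho>" unfolding \<rho>_def by (rule P.prob_space_distr) simp
    moreover have "integrable \<rho> (\<lambda>x. norm x)"
    proof (subst integrable_iff_bounded, intro conjI)
      show "(\<lambda>x. norm x) \<in> borel_measurable \<rho>" unfolding \<rho>_def by simp
      have "(\<integral>\<^sup>+x. ennreal (norm (norm x)) \<partial>\<rho>) \<le> (\<integral>\<^sup>+x. e2ennreal (f x + ereal C) \<partial>\<rho>)"
        by (rule nn_integral_mono) (simp add: G0')
      also have "\<dots> < \<infinity>"
      proof -
        have "enn2ereal (\<integral>\<^sup>+x. e2ennreal (f x + ereal C) \<partial>\<rho>) < \<infinity>" using GXb by (rule order.strict_trans1) simp
        then show ?thesis by (metis enn2ereal_eq_top_iff enn2ereal_top infinity_ennreal_def less_ennreal.rep_eq)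
      qed
      finally show "(\<integral>\<^sup>+x. ennreal (norm (norm x)) \<partial>\<rho>) < \<infinity>" .
    qed
    ultimately show ?thesis unfolding P1_def by simp
  qed
  have eint\<rho>: "eint \<rho> f \<le> I"
  proof -
    have "eint \<rho> f = enn2ereal (\<integral>\<^sup>+x. e2ennreal (f x + ereal C) \<partial>\<rho>) - ereal C" by (rule eintG[OF \<rho>P])
    also have "\<dots> \<le> ereal (i + C) - ereal C" using GXb by (rule ereal_minus_mono) simp
    also have "\<dots> = I" using Ii by simp
    finally show ?thesis .
  qed
  have cvx: "convex_le \<mu>' \<rho>" if \<mu>'P: "\<mu>' \<in> P1" and cl: "\<And>n. convex_le \<mu>' (\<rho>s n)" for \<mu>'
    unfolding convex_le_def
  proof (intro allI impI)
    fix \<phi> :: "'a \<Rightarrow> real" assume cv: "convex_on UNIV \<phi>"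
    obtain \<psi> :: "nat \<Rightarrow> 'a \<Rightarrow> real" and cc L where
      ap: "\<And>n. convex_on UNIV (\<psi> n)" "\<And>n. continuous_on UNIV (\<psi> n)"
      "\<And>n x. \<bar>\<psi> n x\<bar> \<le> cc n + L n * norm x" "\<And>n. 0 \<le> L n"
      "\<And>n x. \<psi> n x \<le> \<psi> (Suc n) x" "\<And>x. (\<lambda>n. \<psi> n x) \<longlonglongrightarrow> \<phi> x"
      using infconv_approx[OF cv] by blast
    have \<psi>m[measurable]: "\<psi> n \<in> borel_measurable borel" for n by (rule borel_measurable_continuous_onI[OF ap(2)])
    have \<phi>m: "\<phi> \<in> borel_measurable borel"
      by (rule borel_measurable_continuous_onI[OF convex_on_continuous[OF open_UNIV cv]])
    have intP: "integrable M (\<psi> n)" if "M \<in> P1" for M n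
      by (rule integrable_lin[OF that \<psi>m ap(3) ap(4)])
    have le: "(\<integral>x. \<psi> n x \<partial>\<mu>') \<le> (\<integral>x. \<psi> n x \<partial>\<rho>)" for n
    proof -
      have intk: "integrable \<Omega> (\<lambda>\<omega>. \<psi> n (Xs k \<omega>))" for k
        using intP[OF \<rho>sP[of "r k"], of n] unfolding cp(4)[of k, symmetric]
        by (subst (asm) integrable_distr_eq) auto
      have intX: "integrable \<Omega> (\<lambda>\<omega>. \<psi> n (X \<omega>))"
        using intP[OF \<rho>P, of n] unfolding \<rho>_def by (subst (asm) integrable_distr_eq) auto
      have cle: "(\<integral>x. \<psi> n x \<partial>\<mu>') \<le> (\<integral>\<omega>. \<psi> n (Xs k \<omega>) \<partial>\<Omega>)" for k
      proof -
        have "eint \<mu>' (\<lambda>x. ereal (\<psi> n x)) \<le> eint (\<rho>s (r k)) (\<lambda>x. ereal (\<psi> n x))"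
          using cl[of "r k"] ap(1)[of n] unfolding convex_le_def by blast
        then have "(\<integral>x. \<psi> n x \<partial>\<mu>') \<le> (\<integral>x. \<psi> n x \<partial>\<rho>s (r k))"
          unfolding eint_real[OF intP[OF \<mu>'P]] eint_real[OF intP[OF \<rho>sP]] by simp
        also have "(\<integral>x. \<psi> n x \<partial>\<rho>s (r k)) = (\<integral>\<omega>. \<psi> n (Xs k \<omega>) \<partial>\<Omega>)"
          unfolding cp(4)[of k, symmetric] by (rule integral_distr) auto
        finally show ?thesis .
      qed
      have "(\<integral>x. \<psi> n x \<partial>\<mu>') \<le> (\<integral>\<omega>. \<psi> n (X \<omega>) \<partial>\<Omega>)"
      proof (rule key_K[OF lsc ninf sl C(1) C(2) cp(1) cp(3) cp(5) cp(6) B0 _ intk intX ap(2) ap(3) ap(4) cle])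
        fix k show "(\<integral>\<^sup>+\<omega>. e2ennreal (f (Xs k \<omega>) + ereal C) \<partial>\<Omega>) \<le> ennreal B"
          unfolding GXs by (rule Gb1)
      qed
      also have "(\<integral>\<omega>. \<psi> n (X \<omega>) \<partial>\<Omega>) = (\<integral>x. \<psi> n x \<partial>\<rho>)"
        unfolding \<rho>_def by (rule integral_distr[symmetric]) auto
      finally show ?thesis .
    qed
    have l1: "(\<lambda>n. ereal (\<integral>x. \<psi> n x \<partial>\<mu>')) \<longlonglongrightarrow> eint \<mu>' (\<lambda>x. ereal (\<phi> x))"
      by (rule mono_conv_eint[OF \<mu>'P \<phi>m intP[OF \<mu>'P] ap(5) ap(6)])
    have l2: "(\<lambda>n. ereal (\<integral>x. \<psi> n x \<partial>\<rho>)) \<longlonglongrightarrow> eint \<rho> (\<lambda>x. ereal (\<phi> x))"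
      by (rule mono_conv_eint[OF \<rho>P \<phi>m intP[OF \<rho>P] ap(5) ap(6)])
    show "eint \<mu>' (\<lambda>x. ereal (\<phi> x)) \<le> eint \<rho> (\<lambda>x. ereal (\<phi> x))"
      by (rule LIMSEQ_le[OF l1 l2]) (use le in auto)
  qed
  have \<rho>S: "\<rho> \<in> S"
    unfolding S_def using \<rho>P cvx[OF assms(1)] cvx[OF assms(2)] \<rho>s(1) unfolding S_def by auto
  have "I \<le> eint \<rho> f" unfolding I_def using \<rho>S by (rule INF_lower)
  then have "eint \<rho> f = I" using eint\<rho> by simp
  then show ?thesis using \<rho>S unfolding S_def I_def by blast
qed

end
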